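(* Let $(M^3,\,g,\,f)$ be a three-dimensional Miao-Tam critical metric. Then \[ f^2|C|^2 = -4f\,C_{ijk}\nabla^if\,\mathring{R}^{jk}, \] where $C$ is the Cotton tensor and $\mathring{R}_{jk}$ are the components of the traceless Ricci tensor.
   Context: A Miao-Tam critical metric is a triple $(M^n,g,f)$ where $(M^n,g)$ is a compact Riemannian manifold of dimension $n\ge 3$ with smooth boundary $\partial M$, and $f:M\to\mathbb{R}$ is a smooth function with $f^{-1}(0)=\partial M$ satisfying $-(\Delta f)g+\mathrm{Hess}\, f-f\,\mathrm{Ric}=g$, where $\mathrm{Ric}$, $\mathrm{Hess}$, $\Delta$ are the Ricci tensor, Hessian and Laplacian of $g$. The traceless Ricci tensor is $\mathring{R}_{ij}=R_{ij}-\frac{R}{3}g_{ij}$ with $R$ the scalar curvature. The Cotton tensor in dimension 3 is $C_{ijk}=\nabla_{i}R_{jk}-\nabla_{j}R_{ik}-\frac{1}{4}\big(\nabla_{i}R\, g_{jk}-\nabla_{j}R\, g_{ik}\big)$, and $|C|^2=C_{ijk}C^{ijk}$. Indices are raised with $g$ and repeated indices are summed. *)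

theory Defs
  imports "HOL-Analysis.Analysis" "HOL-Library.Numeral_Type"
begin

text \<open>Local coordinate description of a Riemannian 3-manifold: a coordinate
domain U (open subset of R^3), metric coefficients g x i j, indices of type 3.\<close>

type_synonym pt = "real^3"
type_synonym idx = 3

definition pd :: "idx \<Rightarrow> (pt \<Rightarrow> real) \<Rightarrow> pt \<Rightarrow> real" where
  "pd i h x = deriv (\<lambda>t. h (x + t *\<^sub>R axis i 1)) 0"

fun iter_pd :: "idx list \<Rightarrow> (pt \<Rightarrow> real) \<Rightarrow> pt \<Rightarrow> real" where
  "iter_pd [] h = h"
| "iter_pd (i # is) h = pd i (iter_pd is h)"

definition smooth_on :: "pt set \<Rightarrow> (pt \<Rightarrow> real) \<Rightarrow> bool" where
  "smooth_on U h \<longleftrightarrow> (\<forall>is. continuous_on U (iter_pd is h) \<and>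
       (\<forall>x\<in>U. iter_pd is h differentiable (at x)))"

definition riem_metric_on :: "pt set \<Rightarrow> (pt \<Rightarrow> idx \<Rightarrow> idx \<Rightarrow> real) \<Rightarrow> bool" where
  "riem_metric_on U g \<longleftrightarrow>
     (\<forall>i j. smooth_on U (\<lambda>x. g x i j)) \<and>
     (\<forall>x\<in>U. \<forall>i j. g x i j = g x j i) \<and>
     (\<forall>x\<in>U. \<forall>v::real^3. v \<noteq> 0 \<longrightarrow> (\<Sum>i\<in>UNIV. \<Sum>j\<in>UNIV. g x i j * v$i * v$j) > 0)"

definition ginv :: "(pt \<Rightarrow> idx \<Rightarrow> idx \<Rightarrow> real) \<Rightarrow> pt \<Rightarrow> idx \<Rightarrow> idx \<Rightarrow> real" where
  "ginv g x i j = matrix_inv (\<chi> a b. g x a b) $ i $ j"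

text \<open>Christoffel symbols, christoffel g x k i j = Gamma^k_ij.\<close>
definition christoffel :: "(pt \<Rightarrow> idx \<Rightarrow> idx \<Rightarrow> real) \<Rightarrow> pt \<Rightarrow> idx \<Rightarrow> idx \<Rightarrow> idx \<Rightarrow> real" where
  "christoffel g x k i j = (1/2) * (\<Sum>l\<in>UNIV. ginv g x k l *
      (pd i (\<lambda>y. g y j l) x + pd j (\<lambda>y. g y i l) x - pd l (\<lambda>y. g y i j) x))"

text \<open>Ricci tensor (sign convention: positive on the round sphere).\<close>
definition ricci :: "(pt \<Rightarrow> idx \<Rightarrow> idx \<Rightarrow> real) \<Rightarrow> pt \<Rightarrow> idx \<Rightarrow> idx \<Rightarrow> real" where
  "ricci g x i j = (\<Sum>k\<in>UNIV. pd k (\<lambda>y. christoffel g y k i j) x - pd j (\<lambda>y. christoffel g y k i k) x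
      + (\<Sum>l\<in>UNIV. christoffel g x k k l * christoffel g x l i j
             - christoffel g x k j l * christoffel g x l i k))"

definition scal :: "(pt \<Rightarrow> idx \<Rightarrow> idx \<Rightarrow> real) \<Rightarrow> pt \<Rightarrow> real" where
  "scal g x = (\<Sum>i\<in>UNIV. \<Sum>j\<in>UNIV. ginv g x i j * ricci g x i j)"

definition traceless_ricci :: "(pt \<Rightarrow> idx \<Rightarrow> idx \<Rightarrow> real) \<Rightarrow> pt \<Rightarrow> idx \<Rightarrow> idx \<Rightarrow> real" where
  "traceless_ricci g x i j = ricci g x i j - scal g x / 3 * g x i j"

definition hess :: "(pt \<Rightarrow> idx \<Rightarrow> idx \<Rightarrow> real) \<Rightarrow> (pt \<Rightarrow> real) \<Rightarrow> pt \<Rightarrow> idx \<Rightarrow> idx \<Rightarrow> real" where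
  "hess g f x i j = pd i (pd j f) x - (\<Sum>k\<in>UNIV. christoffel g x k i j * pd k f x)"

definition laplacian :: "(pt \<Rightarrow> idx \<Rightarrow> idx \<Rightarrow> real) \<Rightarrow> (pt \<Rightarrow> real) \<Rightarrow> pt \<Rightarrow> real" where
  "laplacian g f x = (\<Sum>i\<in>UNIV. \<Sum>j\<in>UNIV. ginv g x i j * hess g f x i j)"

definition cov_deriv2 :: "(pt \<Rightarrow> idx \<Rightarrow> idx \<Rightarrow> real) \<Rightarrow> (pt \<Rightarrow> idx \<Rightarrow> idx \<Rightarrow> real)
     \<Rightarrow> pt \<Rightarrow> idx \<Rightarrow> idx \<Rightarrow> idx \<Rightarrow> real" where
  "cov_deriv2 g T x i j k = pd i (\<lambda>y. T y j k) x
     - (\<Sum>l\<in>UNIV. christoffel g x l i j * T x l k + christoffel g x l i k * T x j l)"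

definition cotton :: "(pt \<Rightarrow> idx \<Rightarrow> idx \<Rightarrow> real) \<Rightarrow> pt \<Rightarrow> idx \<Rightarrow> idx \<Rightarrow> idx \<Rightarrow> real" where
  "cotton g x i j k = cov_deriv2 g (ricci g) x i j k - cov_deriv2 g (ricci g) x j i k
     - (1/4) * (pd i (scal g) x * g x j k - pd j (scal g) x * g x i k)"

definition cotton_norm2 :: "(pt \<Rightarrow> idx \<Rightarrow> idx \<Rightarrow> real) \<Rightarrow> pt \<Rightarrow> real" where
  "cotton_norm2 g x = (\<Sum>i\<in>UNIV. \<Sum>j\<in>UNIV. \<Sum>k\<in>UNIV. \<Sum>a\<in>UNIV. \<Sum>b\<in>UNIV. \<Sum>c\<in>UNIV.
      ginv g x i a * ginv g x j b * ginv g x k c * cotton g x i j k * cotton g x a b c)"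

definition miao_tam_eq_on :: "pt set \<Rightarrow> (pt \<Rightarrow> idx \<Rightarrow> idx \<Rightarrow> real) \<Rightarrow> (pt \<Rightarrow> real) \<Rightarrow> bool" where
  "miao_tam_eq_on U g f \<longleftrightarrow> (\<forall>x\<in>U. \<forall>i j.
      - laplacian g f x * g x i j + hess g f x i j - f x * ricci g x i j = g x i j)"

end

theory Submission
  imports Defs
begin


definition lder :: "idx \<Rightarrow> (pt \<Rightarrow> real) \<Rightarrow> pt \<Rightarrow> real \<Rightarrow> bool" where
  "lder i h y D \<longleftrightarrow> ((\<lambda>t. h (y + t *\<^sub>R axis i 1)) has_real_derivative D) (at 0)"

lemma pd_lder: "lder i h y D \<Longrightarrow> pd i h y = D"
  unfolding lder_def pd_def by (rule DERIV_imp_deriv)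

lemma line_deriv:
  fixes h :: "pt \<Rightarrow> real"
  assumes "h differentiable (at (w + t0 *\<^sub>R v))"
  shows "((\<lambda>t. h (w + t *\<^sub>R v)) has_real_derivative frechet_derivative h (at (w + t0 *\<^sub>R v)) v) (at t0)"
proof -
  let ?z = "w + t0 *\<^sub>R v"
  let ?D = "frechet_derivative h (at ?z)"
  have hd: "(h has_derivative ?D) (at ?z)" using assms frechet_derivative_works by blast
  have ld: "((\<lambda>t. w + t *\<^sub>R v) has_derivative (\<lambda>t. t *\<^sub>R v)) (at t0)"
    by (auto intro!: derivative_eq_intros)
  have c: "((h \<circ> (\<lambda>t. w + t *\<^sub>R v)) has_derivative (?D \<circ> (\<lambda>t. t *\<^sub>R v))) (at t0)"
    by (rule diff_chain_at[OF ld]) (simp add: hd)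
  have lin: "linear ?D" using hd has_derivative_linear by blast
  have "(?D \<circ> (\<lambda>t. t *\<^sub>R v)) = (*) (?D v)"
    using linear_cmul[OF lin] by (auto simp: o_def fun_eq_iff mult.commute)
  then have "((\<lambda>t. h (w + t *\<^sub>R v)) has_derivative (*) (?D v)) (at t0)"
    using c by (simp add: o_def)
  then show ?thesis unfolding has_field_derivative_def by simp
qed

lemma pd_frechet:
  assumes "h differentiable (at y)"
  shows "pd i h y = frechet_derivative h (at y) (axis i 1)"
  using line_deriv[of h y 0 "axis i 1"] assms unfolding pd_def
  by (auto intro: DERIV_imp_deriv)

lemma pd_line:
  fixes h :: "pt \<Rightarrow> real"
  assumes "h differentiable (at (w + t0 *\<^sub>R axis i 1))"
  shows "((\<lambda>t. h (w + t *\<^sub>R axis i 1)) has_real_derivative pd i h (w + t0 *\<^sub>R axis i 1)) (at t0)"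
  using line_deriv[OF assms] pd_frechet[OF assms] by simp

lemma lder_diff: "h differentiable (at y) \<Longrightarrow> lder i h y (pd i h y)"
  unfolding lder_def using pd_line[of h y 0 i] by simp

lemma lder_add: "lder i h y A \<Longrightarrow> lder i k y B \<Longrightarrow> lder i (\<lambda>z. h z + k z) y (A + B)"
  unfolding lder_def by (rule DERIV_add)

lemma lder_minus: "lder i h y A \<Longrightarrow> lder i k y B \<Longrightarrow> lder i (\<lambda>z. h z - k z) y (A - B)"
  unfolding lder_def by (rule DERIV_diff)

lemma lder_mult: "lder i h y A \<Longrightarrow> lder i k y B \<Longrightarrow> lder i (\<lambda>z. h z * k z) y (A * k y + h y * B)"
  unfolding lder_def by (drule (1) DERIV_mult) (simp add: mult.commute)

lemma lder_const: "lder i (\<lambda>z. c) y 0"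
  unfolding lder_def by simp

lemma lder_sum:
  assumes "\<And>a. a \<in> S \<Longrightarrow> lder i (F a) y (D a)"
  shows "lder i (\<lambda>z. \<Sum>a\<in>S. F a z) y (\<Sum>a\<in>S. D a)"
  using assms unfolding lder_def by (intro DERIV_sum) auto

lemma eventually_line_in:
  fixes y v :: pt
  assumes "open U" "y \<in> U"
  shows "eventually (\<lambda>t. y + t *\<^sub>R v \<in> U) (nhds (0::real))"
proof -
  have "((\<lambda>t::real. y + t *\<^sub>R v) has_derivative (\<lambda>t. t *\<^sub>R v)) (at 0)"
    by (auto intro!: derivative_eq_intros)
  then have "isCont (\<lambda>t::real. y + t *\<^sub>R v) 0" by (rule has_derivative_continuous)
  then have "((\<lambda>t::real. y + t *\<^sub>R v) \<longlongrightarrow> y) (at 0)" by (simp add: isCont_def)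
  then have "eventually (\<lambda>t. y + t *\<^sub>R v \<in> U) (at 0)"
    using topological_tendstoD assms by blast
  then show ?thesis using assms(2) by (simp add: eventually_nhds_conv_at)
qed

lemma pd_local:
  assumes "open U" "y \<in> U" "\<And>z. z \<in> U \<Longrightarrow> h z = k z"
  shows "pd i h y = pd i k y"
proof -
  have ev: "eventually (\<lambda>t. h (y + t *\<^sub>R axis i 1) = k (y + t *\<^sub>R axis i 1)) (nhds 0)"
    using eventually_line_in[OF assms(1,2), of "axis i 1"] by (rule eventually_mono) (use assms(3) in auto)
  have "\<And>D. DERIV (\<lambda>t. h (y + t *\<^sub>R axis i 1)) 0 :> D \<longleftrightarrow> DERIV (\<lambda>t. k (y + t *\<^sub>R axis i 1)) 0 :> D"
    by (rule DERIV_cong_ev[OF refl ev refl])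
  then show ?thesis unfolding pd_def deriv_def by simp
qed

lemma differentiable_local:
  assumes "open U" "y \<in> U" "\<And>z. z \<in> U \<Longrightarrow> h z = k z" "h differentiable (at y)"
  shows "k differentiable (at y)"
proof -
  obtain D where "(h has_derivative D) (at y)" using assms(4) differentiable_def by blast
  then have "(k has_derivative D) (at y)"
    by (rule has_derivative_transform_within_open[OF _ assms(1,2)]) (use assms(3) in auto)
  then show ?thesis using differentiable_def by blast
qed


definition sbase :: "pt set \<Rightarrow> (pt \<Rightarrow> real) \<Rightarrow> bool" where
  "sbase U h \<longleftrightarrow> continuous_on U h \<and> (\<forall>x\<in>U. h differentiable (at x))"

lemma iter_pd_snoc: "iter_pd (is @ [i]) h = iter_pd is (pd i h)"
  by (induction "is") auto

lemma smooth_on_unfold: "smooth_on U h \<longleftrightarrow> sbase U h \<and> (\<forall>i. smooth_on U (pd i h))"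
proof
  assume s: "smooth_on U h"
  have "sbase U h" using s[unfolded smooth_on_def, rule_format, of "[]"] by (simp add: sbase_def)
  moreover have "smooth_on U (pd i h)" for i
    unfolding smooth_on_def using s[unfolded smooth_on_def] by (metis iter_pd_snoc)
  ultimately show "sbase U h \<and> (\<forall>i. smooth_on U (pd i h))" by blast
next
  assume a: "sbase U h \<and> (\<forall>i. smooth_on U (pd i h))"
  show "smooth_on U h" unfolding smooth_on_def
  proof
    fix "is" show "continuous_on U (iter_pd is h) \<and> (\<forall>x\<in>U. iter_pd is h differentiable at x)"
    proof (cases "is" rule: rev_cases)
      case Nil then show ?thesis using a by (simp add: sbase_def)
    next
      case (snoc js i)
      then show ?thesis using a[THEN conjunct2, rule_format, of i] unfolding smooth_on_def
        by (simp add: iter_pd_snoc)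
    qed
  qed
qed

lemma smooth_coinduct:
  assumes "P h" and step: "\<And>h. P h \<Longrightarrow> sbase U h \<and> (\<forall>i. P (pd i h))"
  shows "smooth_on U h"
proof -
  have "\<forall>h. P h \<longrightarrow> sbase U (iter_pd is h)" for "is"
  proof (induction "is" rule: rev_induct)
    case Nil then show ?case using step by simp
  next
    case (snoc i js)
    then show ?case using step by (simp add: iter_pd_snoc)
  qed
  then show ?thesis using assms(1) unfolding smooth_on_def sbase_def by blast
qed

inductive_set Sm :: "pt set \<Rightarrow> (pt \<Rightarrow> real) set" for U where
  Sm_base: "smooth_on U h \<Longrightarrow> h \<in> Sm U"
| Sm_add: "h \<in> Sm U \<Longrightarrow> k \<in> Sm U \<Longrightarrow> (\<lambda>y. h y + k y) \<in> Sm U"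
| Sm_mult: "h \<in> Sm U \<Longrightarrow> k \<in> Sm U \<Longrightarrow> (\<lambda>y. h y * k y) \<in> Sm U"
| Sm_const: "(\<lambda>y. c) \<in> Sm U"
| Sm_inv: "h \<in> Sm U \<Longrightarrow> (\<forall>y\<in>U. h y \<noteq> 0) \<Longrightarrow> (\<lambda>y. inverse (h y)) \<in> Sm U"
| Sm_cong: "h \<in> Sm U \<Longrightarrow> (\<forall>y\<in>U. k y = h y) \<Longrightarrow> k \<in> Sm U"

lemma Sm_step:
  assumes "open U" "h \<in> Sm U"
  shows "sbase U h \<and> (\<forall>i. pd i h \<in> Sm U)"
  using assms(2)
proof (induction rule: Sm.induct)
  case (Sm_base h)
  then show ?case using smooth_on_unfold Sm.Sm_base by blast
next
  case (Sm_add h k)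
  have b: "sbase U (\<lambda>y. h y + k y)"
    using Sm_add.IH unfolding sbase_def by (auto intro: continuous_on_add differentiable_add)
  have "pd i (\<lambda>y. h y + k y) \<in> Sm U" for i
  proof (rule Sm_cong)
    show "(\<lambda>y. pd i h y + pd i k y) \<in> Sm U" using Sm_add.IH by (blast intro: Sm.Sm_add)
    show "\<forall>y\<in>U. pd i (\<lambda>y. h y + k y) y = pd i h y + pd i k y"
      using Sm_add.IH unfolding sbase_def by (auto intro!: pd_lder lder_add lder_diff)
  qed
  then show ?case using b by blast
next
  case (Sm_mult h k)
  have b: "sbase U (\<lambda>y. h y * k y)"
    using Sm_mult.IH unfolding sbase_def by (auto intro: continuous_on_mult differentiable_mult)
  have "pd i (\<lambda>y. h y * k y) \<in> Sm U" for i
  proof (rule Sm_cong)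
    have p1: "pd i h \<in> Sm U" "pd i k \<in> Sm U" using Sm_mult.IH by blast+
    show "(\<lambda>y. pd i h y * k y + h y * pd i k y) \<in> Sm U"
      by (rule Sm.Sm_add[OF Sm.Sm_mult[OF p1(1) Sm_mult.hyps(2)] Sm.Sm_mult[OF Sm_mult.hyps(1) p1(2)]])
    show "\<forall>y\<in>U. pd i (\<lambda>y. h y * k y) y = pd i h y * k y + h y * pd i k y"
      using Sm_mult.IH unfolding sbase_def by (auto intro!: pd_lder lder_mult lder_diff)
  qed
  then show ?case using b by blast
next
  case (Sm_const c)
  have "pd i (\<lambda>y. c) = (\<lambda>y. 0)" for i
    by (rule ext, rule pd_lder, rule lder_const)
  then show ?case by (auto simp: sbase_def intro: Sm.Sm_const)
next
  case (Sm_inv h)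
  have b: "sbase U (\<lambda>y. inverse (h y))"
    using Sm_inv unfolding sbase_def
    by (auto intro!: continuous_on_inverse differentiable_inverse)
  have "pd i (\<lambda>y. inverse (h y)) \<in> Sm U" for i
  proof (rule Sm_cong)
    show "(\<lambda>y. (\<lambda>y. -1) y * ((\<lambda>y. inverse (h y)) y * ((\<lambda>y. inverse (h y)) y * pd i h y))) \<in> Sm U"
    proof -
      have q: "(\<lambda>y. inverse (h y)) \<in> Sm U" using Sm_inv by (blast intro: Sm.Sm_inv)
      have p: "pd i h \<in> Sm U" using Sm_inv.IH by blast
      show ?thesis by (rule Sm.Sm_mult[OF Sm.Sm_const Sm.Sm_mult[OF q Sm.Sm_mult[OF q p]]])
    qed
    show "\<forall>y\<in>U. pd i (\<lambda>y. inverse (h y)) y = (\<lambda>y. -1) y * ((\<lambda>y. inverse (h y)) y * ((\<lambda>y. inverse (h y)) y * pd i h y))"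
    proof
      fix y assume y: "y \<in> U"
      have d: "lder i h y (pd i h y)" using Sm_inv y unfolding sbase_def by (auto intro: lder_diff)
      have "lder i (\<lambda>y. inverse (h y)) y (- (pd i h y * inverse (h y ^ Suc (Suc 0))))"
        using DERIV_inverse_fun[OF d[unfolded lder_def]] Sm_inv y unfolding lder_def by auto
      then show "pd i (\<lambda>y. inverse (h y)) y = (\<lambda>y. -1) y * ((\<lambda>y. inverse (h y)) y * ((\<lambda>y. inverse (h y)) y * pd i h y))"
        by (auto dest!: pd_lder simp: field_simps power2_eq_square)
    qed
  qed
  then show ?case using b by blast
next
  case (Sm_cong h k)
  have b: "sbase U k" using Sm_cong assms(1) unfolding sbase_def
    by (auto intro: differentiable_local[OF assms(1)] continuous_on_cong[THEN iffD1])
  have "pd i k \<in> Sm U" for i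
    using Sm_cong pd_local[OF assms(1), of _ k h i] by (blast intro: Sm.Sm_cong)
  then show ?case using b by blast
qed

lemma Sm_smooth: "open U \<Longrightarrow> h \<in> Sm U \<Longrightarrow> smooth_on U h"
  by (rule smooth_coinduct[where P="\<lambda>h. h \<in> Sm U"]) (auto dest: Sm_step)

lemma smooth_add: "open U \<Longrightarrow> smooth_on U h \<Longrightarrow> smooth_on U k \<Longrightarrow> smooth_on U (\<lambda>y. h y + k y)"
  by (blast intro: Sm_smooth Sm.intros)
lemma smooth_mult: "open U \<Longrightarrow> smooth_on U h \<Longrightarrow> smooth_on U k \<Longrightarrow> smooth_on U (\<lambda>y. h y * k y)"
  by (blast intro: Sm_smooth Sm.intros)
lemma smooth_const: "open U \<Longrightarrow> smooth_on U (\<lambda>y. c)"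
  by (blast intro: Sm_smooth Sm.intros)
lemma smooth_inverse: "open U \<Longrightarrow> smooth_on U h \<Longrightarrow> (\<forall>y\<in>U. h y \<noteq> 0) \<Longrightarrow> smooth_on U (\<lambda>y. inverse (h y))"
  by (blast intro: Sm_smooth Sm.intros)
lemma smooth_cong: "open U \<Longrightarrow> smooth_on U h \<Longrightarrow> (\<forall>y\<in>U. k y = h y) \<Longrightarrow> smooth_on U k"
  by (blast intro: Sm_smooth Sm.intros)
lemma smooth_pd: "smooth_on U h \<Longrightarrow> smooth_on U (pd i h)"
  using smooth_on_unfold by blast
lemma smooth_diff: "open U \<Longrightarrow> smooth_on U h \<Longrightarrow> smooth_on U k \<Longrightarrow> smooth_on U (\<lambda>y. h y - k y)"
proof -
  assume a: "open U" "smooth_on U h" "smooth_on U k"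
  have "smooth_on U (\<lambda>y. h y + (\<lambda>y. -1) y * k y)"
    using a by (intro smooth_add smooth_mult smooth_const)
  then show ?thesis by simp
qed
lemma smooth_cmult: "open U \<Longrightarrow> smooth_on U h \<Longrightarrow> smooth_on U (\<lambda>y. c * h y)"
  using smooth_mult[of U "\<lambda>y. c" h] smooth_const by blast
lemma smooth_divide: "open U \<Longrightarrow> smooth_on U h \<Longrightarrow> smooth_on U k \<Longrightarrow> (\<forall>y\<in>U. k y \<noteq> 0) \<Longrightarrow> smooth_on U (\<lambda>y. h y / k y)"
  using smooth_mult[OF _ _ smooth_inverse, of U h k] by (simp add: divide_inverse)
lemma smooth_sum:
  assumes "open U" "finite S" "\<And>a. a \<in> S \<Longrightarrow> smooth_on U (F a)"
  shows "smooth_on U (\<lambda>y. \<Sum>a\<in>S. F a y)"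
  using assms(2,3)
proof (induction S rule: finite_induct)
  case empty then show ?case using smooth_const[OF assms(1)] by simp
next
  case (insert a S) then show ?case by (simp add: smooth_add assms(1))
qed

lemma smooth_diffble: "smooth_on U h \<Longrightarrow> y \<in> U \<Longrightarrow> h differentiable (at y)"
  using smooth_on_unfold sbase_def by blast
lemma smooth_cont: "smooth_on U h \<Longrightarrow> continuous_on U h"
  using smooth_on_unfold sbase_def by blast
lemma smooth_lder: "smooth_on U h \<Longrightarrow> y \<in> U \<Longrightarrow> lder i h y (pd i h y)"
  by (rule lder_diff, rule smooth_diffble)


lemma norm_two_axis:
  fixes a b :: real
  shows "norm (a *\<^sub>R axis i (1::real) + b *\<^sub>R axis j 1 :: pt) \<le> \<bar>a\<bar> + \<bar>b\<bar>"
  by (rule order_trans[OF norm_triangle_ineq]) simp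

lemma mixed_step:
  assumes U: "open U" and sh: "smooth_on U h" and y: "y \<in> U"
    and bl: "ball y d \<subseteq> U" and t: "0 < t" "2 * t < d"
  shows "\<exists>\<xi> \<eta>. 0 < \<xi> \<and> \<xi> < t \<and> 0 < \<eta> \<and> \<eta> < t \<and>
    h (y + t *\<^sub>R axis i 1 + t *\<^sub>R axis j 1) - h (y + t *\<^sub>R axis i 1) - h (y + t *\<^sub>R axis j 1) + h y
      = t * t * pd j (pd i h) (y + \<xi> *\<^sub>R axis i 1 + \<eta> *\<^sub>R axis j 1)"
proof -
  let ?ei = "axis i (1::real) :: pt" and ?ej = "axis j (1::real) :: pt"
  have inU: "y + a *\<^sub>R ?ei + b *\<^sub>R ?ej \<in> U" if "0 \<le> a" "a \<le> t" "0 \<le> b" "b \<le> t" for a b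
  proof -
    have "norm (a *\<^sub>R ?ei + b *\<^sub>R ?ej) \<le> \<bar>a\<bar> + \<bar>b\<bar>" by (rule norm_two_axis)
    also have "\<dots> < d" using that t by auto
    finally have "dist (y + a *\<^sub>R ?ei + b *\<^sub>R ?ej) y < d"
      by (simp add: dist_norm algebra_simps)
    then show ?thesis using bl by (auto simp: dist_commute)
  qed
  have dh: "h differentiable (at z)" if "z \<in> U" for z using sh that by (rule smooth_diffble)
  have dpih: "pd i h differentiable (at z)" if "z \<in> U" for z
    using smooth_pd[OF sh] that by (rule smooth_diffble)
  define a where "a s = h ((y + t *\<^sub>R ?ej) + s *\<^sub>R ?ei) - h (y + s *\<^sub>R ?ei)" for s
  have da: "DERIV a s :> (pd i h ((y + t *\<^sub>R ?ej) + s *\<^sub>R ?ei) - pd i h (y + s *\<^sub>R ?ei))"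
    if "0 \<le> s" "s \<le> t" for s
  proof -
    have z1: "(y + t *\<^sub>R ?ej) + s *\<^sub>R ?ei \<in> U" using inU[of s t] that t by (simp add: algebra_simps)
    have z2: "y + s *\<^sub>R ?ei \<in> U" using inU[of s 0] that t by simp
    show ?thesis unfolding a_def
      by (intro DERIV_diff pd_line dh z1 z2)
  qed
  obtain \<xi> where xi: "0 < \<xi>" "\<xi> < t"
    and eqa: "a t - a 0 = (t - 0) * (pd i h ((y + t *\<^sub>R ?ej) + \<xi> *\<^sub>R ?ei) - pd i h (y + \<xi> *\<^sub>R ?ei))"
    using MVT2[OF t(1), of a "\<lambda>s. pd i h ((y + t *\<^sub>R ?ej) + s *\<^sub>R ?ei) - pd i h (y + s *\<^sub>R ?ei)"] da
    by auto
  define b where "b s = pd i h ((y + \<xi> *\<^sub>R ?ei) + s *\<^sub>R ?ej)" for s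
  have db: "DERIV b s :> pd j (pd i h) ((y + \<xi> *\<^sub>R ?ei) + s *\<^sub>R ?ej)" if "0 \<le> s" "s \<le> t" for s
  proof -
    have "(y + \<xi> *\<^sub>R ?ei) + s *\<^sub>R ?ej \<in> U" using inU[of \<xi> s] that xi by simp
    then show ?thesis unfolding b_def by (intro pd_line dpih)
  qed
  obtain \<eta> where eta: "0 < \<eta>" "\<eta> < t"
    and eqb: "b t - b 0 = (t - 0) * pd j (pd i h) ((y + \<xi> *\<^sub>R ?ei) + \<eta> *\<^sub>R ?ej)"
    using MVT2[OF t(1), of b "\<lambda>s. pd j (pd i h) ((y + \<xi> *\<^sub>R ?ei) + s *\<^sub>R ?ej)"] db
    by auto
  have A: "a t - a 0 = h (y + t *\<^sub>R ?ei + t *\<^sub>R ?ej) - h (y + t *\<^sub>R ?ei) - h (y + t *\<^sub>R ?ej) + h y"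
    unfolding a_def by (simp add: algebra_simps)
  have B: "b t - b 0 = pd i h ((y + t *\<^sub>R ?ej) + \<xi> *\<^sub>R ?ei) - pd i h (y + \<xi> *\<^sub>R ?ei)"
    unfolding b_def by (simp add: algebra_simps)
  have X: "pd i h ((y + t *\<^sub>R ?ej) + \<xi> *\<^sub>R ?ei) - pd i h (y + \<xi> *\<^sub>R ?ei)
      = t * pd j (pd i h) (y + \<xi> *\<^sub>R ?ei + \<eta> *\<^sub>R ?ej)"
    using eqb B by simp
  have "h (y + t *\<^sub>R ?ei + t *\<^sub>R ?ej) - h (y + t *\<^sub>R ?ei) - h (y + t *\<^sub>R ?ej) + h y
      = t * (t * pd j (pd i h) (y + \<xi> *\<^sub>R ?ei + \<eta> *\<^sub>R ?ej))"
    using eqa A X by simp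
  then show ?thesis using xi eta by (metis mult.assoc)
qed

lemma mixed_pd:
  assumes U: "open U" and sh: "smooth_on U h" and y: "y \<in> U"
  shows "pd i (pd j h) y = pd j (pd i h) y"
proof (rule ccontr)
  let ?F = "pd j (pd i h)" and ?G = "pd i (pd j h)"
  assume ne: "?G y \<noteq> ?F y"
  define e where "e = \<bar>?F y - ?G y\<bar> / 2"
  have e: "e > 0" using ne by (simp add: e_def)
  obtain d where d: "d > 0" "ball y d \<subseteq> U" using U y open_contains_ball by blast
  have cF: "isCont ?F y" using smooth_cont[OF smooth_pd[OF smooth_pd[OF sh]]] U y
    continuous_on_eq_continuous_at by blast
  have cG: "isCont ?G y" using smooth_cont[OF smooth_pd[OF smooth_pd[OF sh]]] U y
    continuous_on_eq_continuous_at by blast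
  obtain dF where dF: "dF > 0" "\<And>z. dist z y < dF \<Longrightarrow> dist (?F z) (?F y) < e"
    using cF e unfolding continuous_at_eps_delta by blast
  obtain dG where dG: "dG > 0" "\<And>z. dist z y < dG \<Longrightarrow> dist (?G z) (?G y) < e"
    using cG e unfolding continuous_at_eps_delta by blast
  define t where "t = min d (min dF dG) / 4"
  have t: "0 < t" "2 * t < d" "2 * t < dF" "2 * t < dG" using d dF dG by (auto simp: t_def)
  obtain \<xi> \<eta> where xe: "0 < \<xi>" "\<xi> < t" "0 < \<eta>" "\<eta> < t"
    and e1: "h (y + t *\<^sub>R axis i 1 + t *\<^sub>R axis j 1) - h (y + t *\<^sub>R axis i 1) - h (y + t *\<^sub>R axis j 1) + h y
      = t * t * ?F (y + \<xi> *\<^sub>R axis i 1 + \<eta> *\<^sub>R axis j 1)"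
    using mixed_step[OF U sh y d(2) t(1,2), of i j] by blast
  obtain \<xi>' \<eta>' where xe': "0 < \<xi>'" "\<xi>' < t" "0 < \<eta>'" "\<eta>' < t"
    and e2: "h (y + t *\<^sub>R axis j 1 + t *\<^sub>R axis i 1) - h (y + t *\<^sub>R axis j 1) - h (y + t *\<^sub>R axis i 1) + h y
      = t * t * ?G (y + \<xi>' *\<^sub>R axis j 1 + \<eta>' *\<^sub>R axis i 1)"
    using mixed_step[OF U sh y d(2) t(1,2), of j i] by blast
  have pe: "y + t *\<^sub>R axis j 1 + t *\<^sub>R axis i 1 = y + t *\<^sub>R axis i 1 + t *\<^sub>R axis j 1"
    by (simp add: algebra_simps)
  have "t * t * ?F (y + \<xi> *\<^sub>R axis i 1 + \<eta> *\<^sub>R axis j 1) = t * t * ?G (y + \<xi>' *\<^sub>R axis j 1 + \<eta>' *\<^sub>R axis i 1)"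
    using e1 e2 unfolding pe by linarith
  then have eq: "?F (y + \<xi> *\<^sub>R axis i 1 + \<eta> *\<^sub>R axis j 1) = ?G (y + \<xi>' *\<^sub>R axis j 1 + \<eta>' *\<^sub>R axis i 1)"
    using t(1) by simp
  have n1: "dist (y + \<xi> *\<^sub>R axis i 1 + \<eta> *\<^sub>R axis j 1) y < dF"
  proof -
    have "norm (\<xi> *\<^sub>R axis i (1::real) + \<eta> *\<^sub>R axis j 1 :: pt) \<le> \<bar>\<xi>\<bar> + \<bar>\<eta>\<bar>" by (rule norm_two_axis)
    then show ?thesis using xe t by (simp add: dist_norm algebra_simps)
  qed
  have n2: "dist (y + \<xi>' *\<^sub>R axis j 1 + \<eta>' *\<^sub>R axis i 1) y < dG"
  proof -
    have "norm (\<xi>' *\<^sub>R axis j (1::real) + \<eta>' *\<^sub>R axis i 1 :: pt) \<le> \<bar>\<xi>'\<bar> + \<bar>\<eta>'\<bar>" by (rule norm_two_axis)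
    then show ?thesis using xe' t by (simp add: dist_norm algebra_simps)
  qed
  have "dist (?F y) (?G y) < e + e"
    using dF(2)[OF n1] dG(2)[OF n2] eq
    by (smt (verit, best) dist_commute dist_triangle)
  then show False by (simp add: e_def dist_real_def)
qed


definition eps :: "3 \<Rightarrow> 3 \<Rightarrow> 3 \<Rightarrow> real" where
 "eps a b c = (if a = b \<or> b = c \<or> a = c then 0 else if b = a + 1 then 1 else -1)"
definition nx :: "3 \<Rightarrow> 3" where "nx a = (if a = 1 then 2 else if a = 2 then 3 else 1)"
definition adj3 :: "(3 \<Rightarrow> 3 \<Rightarrow> real) \<Rightarrow> 3 \<Rightarrow> 3 \<Rightarrow> real" where
 "adj3 g a b = g (nx a) (nx b) * g (nx (nx a)) (nx (nx b)) - g (nx a) (nx (nx b)) * g (nx (nx a)) (nx b)"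
definition det3 :: "(3 \<Rightarrow> 3 \<Rightarrow> real) \<Rightarrow> real" where
 "det3 g = (\<Sum>b\<in>UNIV. g 1 b * adj3 g 1 b)"
definition Wm :: "(3 \<Rightarrow> 3 \<Rightarrow> real) \<Rightarrow> 3 \<Rightarrow> 3 \<Rightarrow> 3 \<Rightarrow> 3 \<Rightarrow> real" where
 "Wm M l k i j = (\<Sum>a\<in>UNIV. \<Sum>b\<in>UNIV. eps l k a * eps i j b * M a b)"
definition Tr3 :: "(3 \<Rightarrow> 3 \<Rightarrow> real) \<Rightarrow> (3 \<Rightarrow> 3 \<Rightarrow> 3 \<Rightarrow> 3 \<Rightarrow> real) \<Rightarrow> 3 \<Rightarrow> 3 \<Rightarrow> real" where
 "Tr3 H W k j = (\<Sum>l\<in>UNIV. \<Sum>i\<in>UNIV. H l i * W l k i j)"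
definition Sc3 :: "(3 \<Rightarrow> 3 \<Rightarrow> real) \<Rightarrow> (3 \<Rightarrow> 3 \<Rightarrow> real) \<Rightarrow> real" where
 "Sc3 H T = (\<Sum>k\<in>UNIV. \<Sum>j\<in>UNIV. H k j * T k j)"

lemma adj3_vals:
  "adj3 g 1 1 = g 2 2 * g 3 3 - g 2 3 * g 3 2"
  "adj3 g 1 2 = g 2 3 * g 3 1 - g 2 1 * g 3 3"
  "adj3 g 1 3 = g 2 1 * g 3 2 - g 2 2 * g 3 1"
  "adj3 g 2 1 = g 3 2 * g 1 3 - g 3 3 * g 1 2"
  "adj3 g 2 2 = g 3 3 * g 1 1 - g 3 1 * g 1 3"
  "adj3 g 2 3 = g 3 1 * g 1 2 - g 3 2 * g 1 1"
  "adj3 g 3 1 = g 1 2 * g 2 3 - g 1 3 * g 2 2"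
  "adj3 g 3 2 = g 1 3 * g 2 1 - g 1 1 * g 2 3"
  "adj3 g 3 3 = g 1 1 * g 2 2 - g 1 2 * g 2 1"
  by (simp_all add: adj3_def nx_def)
lemma det3_val: "det3 g = g 1 1 * (g 2 2 * g 3 3 - g 2 3 * g 3 2) + g 1 2 * (g 2 3 * g 3 1 - g 2 1 * g 3 3) + g 1 3 * (g 2 1 * g 3 2 - g 2 2 * g 3 1)"
  by (simp add: sum_3 adj3_def nx_def det3_def)
lemma PC:
  assumes gs: "\<And>a b. g a b = g b a" and Ms: "\<And>a b. M a b = M b a"
  shows "det3 g * det3 g * Wm M l k i j * 2 =
     2 * det3 g * (Tr3 (adj3 g) (Wm M) l i * g k j - Tr3 (adj3 g) (Wm M) l j * g k i
        + Tr3 (adj3 g) (Wm M) k j * g l i - Tr3 (adj3 g) (Wm M) k i * g l j)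
     - Sc3 (adj3 g) (Tr3 (adj3 g) (Wm M)) * (g l i * g k j - g l j * g k i)"
proof -
  have s: "g 2 1 = g 1 2" "g 3 1 = g 1 3" "g 3 2 = g 2 3" "M 2 1 = M 1 2" "M 3 1 = M 1 3" "M 3 2 = M 2 3"
    using gs Ms by blast+
  have "\<forall>l k i j. det3 g * det3 g * Wm M l k i j * 2 =
     2 * det3 g * (Tr3 (adj3 g) (Wm M) l i * g k j - Tr3 (adj3 g) (Wm M) l j * g k i
        + Tr3 (adj3 g) (Wm M) k j * g l i - Tr3 (adj3 g) (Wm M) k i * g l j)
     - Sc3 (adj3 g) (Tr3 (adj3 g) (Wm M)) * (g l i * g k j - g l j * g k i)"
    unfolding forall_3
    apply (intro conjI)
    apply (simp add: sum_3 eps_def adj3_vals det3_val Wm_def Tr3_def Sc3_def s; algebra)+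
    done
  then show ?thesis by blast
qed



lemma adj3_sym: assumes gs: "\<And>a b. g a b = g b a" shows "adj3 g a b = adj3 g b a"
proof -
  have s: "g 2 1 = g 1 2" "g 3 1 = g 1 3" "g 3 2 = g 2 3" using gs by blast+
  have "\<forall>a b. adj3 g a b = adj3 g b a" unfolding forall_3 by (simp add: adj3_vals s algebra_simps)
  then show ?thesis by blast
qed

lemma laplace_row: "(\<Sum>b\<in>UNIV. g c b * adj3 g a b) = (if a = c then det3 g else 0)"
proof -
  have "\<forall>a c. (\<Sum>b\<in>UNIV. g c b * adj3 g a b) = (if a = c then det3 g else 0)"
    unfolding forall_3 by (simp add: sum_3 adj3_vals det3_val algebra_simps)
  then show ?thesis by blast
qed

lemma laplace_col: "(\<Sum>b\<in>UNIV. g b c * adj3 g b a) = (if a = c then det3 g else 0)"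
proof -
  have "\<forall>a c. (\<Sum>b\<in>UNIV. g b c * adj3 g b a) = (if a = c then det3 g else 0)"
    unfolding forall_3 by (simp add: sum_3 adj3_vals det3_val algebra_simps)
  then show ?thesis by blast
qed

lemma eps_contract: "(\<Sum>a\<in>UNIV. eps l k a * eps p q a) =
   (if l = p \<and> k = q then 1 else 0) - (if l = q \<and> k = p then 1 else 0)"
proof -
  have "\<forall>l k p q. (\<Sum>a\<in>UNIV. eps l k a * eps p q a) =
   (if l = p \<and> k = q then 1 else 0) - (if l = q \<and> k = p then 1 else 0)"
    unfolding forall_3 by (simp add: sum_3 eps_def)
  then show ?thesis by blast
qed

lemma delta2: fixes l k :: 3 shows "(\<Sum>p\<in>UNIV. \<Sum>q\<in>UNIV. ((if l = p \<and> k = q then 1 else 0) - (if l = q \<and> k = p then 1 else 0)) * F p q)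
   = F l k - (F k l :: real)"
proof -
  have "\<forall>l k. (\<Sum>p\<in>UNIV. \<Sum>q\<in>UNIV. ((if l = p \<and> k = q then 1 else 0) - (if l = q \<and> k = p then 1 else 0)) * F p q)
   = F l k - (F k l :: real)"
    unfolding forall_3 by (simp add: sum_3)
  then show ?thesis by blast
qed

lemma pair_sym:
  fixes R :: "3 \<Rightarrow> 3 \<Rightarrow> 3 \<Rightarrow> 3 \<Rightarrow> real"
  assumes a1: "\<And>l k i j. R l k i j = - R k l i j" and a2: "\<And>l k i j. R l k i j = - R l k j i"
    and b1: "\<And>l k i j. R l k i j + R l i j k + R l j k i = 0"
  shows "R l k i j = R i j l k"
  using b1[of l k i j] b1[of k i j l] b1[of i j l k] b1[of j l k i]
    a1[of l k i j] a1[of l i j k] a1[of l j k i] a1[of k i j l] a1[of k j l i] a1[of k l i j]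
    a1[of i j l k] a1[of i l k j] a1[of i k j l] a1[of j l k i] a1[of j k i l] a1[of j i l k]
    a2[of l k i j] a2[of l i j k] a2[of l j k i] a2[of k i j l] a2[of k j l i] a2[of k l i j]
    a2[of i j l k] a2[of i l k j] a2[of i k j l] a2[of j l k i] a2[of j k i l] a2[of j i l k]
  by linarith


lemma decomp3:
  fixes g h :: "3 \<Rightarrow> 3 \<Rightarrow> real" and R :: "3 \<Rightarrow> 3 \<Rightarrow> 3 \<Rightarrow> 3 \<Rightarrow> real"
  assumes gs: "\<And>a b. g a b = g b a" and hdef: "\<And>a b. h a b = adj3 g a b / det3 g"
    and dn: "det3 g \<noteq> 0"
    and a1: "\<And>l k i j. R l k i j = - R k l i j" and a2: "\<And>l k i j. R l k i j = - R l k j i"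
    and b1: "\<And>l k i j. R l k i j + R l i j k + R l j k i = 0"
  defines "Ric \<equiv> \<lambda>k j. \<Sum>l\<in>UNIV. \<Sum>i\<in>UNIV. h l i * R l k i j"
  defines "s \<equiv> \<Sum>k\<in>UNIV. \<Sum>j\<in>UNIV. h k j * Ric k j"
  shows "R l k i j = Ric l i * g k j - Ric l j * g k i + Ric k j * g l i - Ric k i * g l j
      - s / 2 * (g l i * g k j - g l j * g k i)"
proof -
  define M where "M a b = R (nx a) (nx (nx a)) (nx b) (nx (nx b))" for a b
  have z1: "R l l i j = 0" for l i j using a1[of l l i j] by simp
  have z2: "R l k i i = 0" for l k i using a2[of l k i i] by simp
  have "\<forall>l k i j. R l k i j = Wm M l k i j"
    unfolding forall_3
    apply (intro conjI)
    apply (simp add: Wm_def sum_3 eps_def M_def nx_def z1 z2; (metis a1 a2 minus_minus)?)+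
    done
  then have RW: "R l k i j = Wm M l k i j" for l k i j by blast
  have Ms: "M a b = M b a" for a b unfolding M_def by (rule pair_sym[OF a1 a2 b1])
  let ?D = "det3 g"
  let ?T = "Tr3 (adj3 g) (Wm M)"
  let ?S = "Sc3 (adj3 g) ?T"
  have Ric: "Ric k j = ?T k j / ?D" for k j
    unfolding Ric_def Tr3_def hdef RW by (simp add: sum_divide_distrib)
  have s: "s = ?S / (?D * ?D)"
    unfolding s_def Sc3_def hdef Ric by (simp add: sum_divide_distrib)
  have P: "?D * ?D * Wm M l k i j * 2 =
     2 * ?D * (?T l i * g k j - ?T l j * g k i + ?T k j * g l i - ?T k i * g l j)
     - ?S * (g l i * g k j - g l j * g k i)"
    by (rule PC[OF gs Ms])
  show ?thesis unfolding Ric s RW[of l k i j]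
    using P dn apply (simp add: field_simps)
    by algebra
qed


lemma AL1:
  fixes h :: "idx \<Rightarrow> idx \<Rightarrow> real" and Gl :: "idx \<Rightarrow> idx \<Rightarrow> idx \<Rightarrow> real" and ddg :: "idx \<Rightarrow> idx \<Rightarrow> idx \<Rightarrow> idx \<Rightarrow> real"
  assumes hs: "\<And>a b. h a b = h b a" and Gls: "\<And>a i j. Gl a i j = Gl a j i"
    and d1: "\<And>i j a b. ddg i j a b = ddg j i a b" and d2: "\<And>i j a b. ddg i j a b = ddg i j b a"
  shows "((ddg i j k l + ddg i k j l - ddg i l j k)/2 - (ddg j i k l + ddg j k i l - ddg j l i k)/2
     - (\<Sum>m\<in>UNIV. \<Sum>n\<in>UNIV. Gl m i l * h m n * Gl n j k) + (\<Sum>m\<in>UNIV. \<Sum>n\<in>UNIV. Gl m j l * h m n * Gl n i k))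
   = - ((ddg i j l k + ddg i l j k - ddg i k j l)/2 - (ddg j i l k + ddg j l i k - ddg j k i l)/2
     - (\<Sum>m\<in>UNIV. \<Sum>n\<in>UNIV. Gl m i k * h m n * Gl n j l) + (\<Sum>m\<in>UNIV. \<Sum>n\<in>UNIV. Gl m j k * h m n * Gl n i l))"
proof -
  have s1: "(\<Sum>m\<in>UNIV. \<Sum>n\<in>UNIV. Gl m j k * h m n * Gl n i l) = (\<Sum>m\<in>UNIV. \<Sum>n\<in>UNIV. Gl m i l * h m n * Gl n j k)"
    by (subst sum.swap) (simp add: hs mult.commute mult.left_commute)
  have s2: "(\<Sum>m\<in>UNIV. \<Sum>n\<in>UNIV. Gl m i k * h m n * Gl n j l) = (\<Sum>m\<in>UNIV. \<Sum>n\<in>UNIV. Gl m j l * h m n * Gl n i k)"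
    by (subst sum.swap) (simp add: hs mult.commute mult.left_commute)
  have "ddg j i k l = ddg i j k l" "ddg i k j l = ddg i k l j" "ddg j l i k = ddg j l k i" using d1 d2 by auto
  show ?thesis unfolding s1 s2 using d1[of j i] d2 by (simp add: field_simps)
qed


definition Rmf :: "(idx \<Rightarrow> idx \<Rightarrow> idx \<Rightarrow> real) \<Rightarrow> (idx \<Rightarrow> idx \<Rightarrow> idx \<Rightarrow> idx \<Rightarrow> real) \<Rightarrow> idx \<Rightarrow> idx \<Rightarrow> idx \<Rightarrow> idx \<Rightarrow> real" where
  "Rmf G dG m k i j = dG i m j k - dG j m i k + (\<Sum>p\<in>UNIV. G m i p * G p j k) - (\<Sum>p\<in>UNIV. G m j p * G p i k)"

definition dRmf :: "(idx \<Rightarrow> idx \<Rightarrow> idx \<Rightarrow> real) \<Rightarrow> (idx \<Rightarrow> idx \<Rightarrow> idx \<Rightarrow> idx \<Rightarrow> real) \<Rightarrow> (idx \<Rightarrow> idx \<Rightarrow> idx \<Rightarrow> idx \<Rightarrow> idx \<Rightarrow> real) \<Rightarrow> idx \<Rightarrow> idx \<Rightarrow> idx \<Rightarrow> idx \<Rightarrow> idx \<Rightarrow> real" where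
  "dRmf G dG ddG n m k i j = ddG n i m j k - ddG n j m i k
     + (\<Sum>p\<in>UNIV. dG n m i p * G p j k + G m i p * dG n p j k)
     - (\<Sum>p\<in>UNIV. dG n m j p * G p i k + G m j p * dG n p i k)"

definition DRmf :: "(idx \<Rightarrow> idx \<Rightarrow> idx \<Rightarrow> real) \<Rightarrow> (idx \<Rightarrow> idx \<Rightarrow> idx \<Rightarrow> idx \<Rightarrow> real) \<Rightarrow> (idx \<Rightarrow> idx \<Rightarrow> idx \<Rightarrow> idx \<Rightarrow> idx \<Rightarrow> real) \<Rightarrow> idx \<Rightarrow> idx \<Rightarrow> idx \<Rightarrow> idx \<Rightarrow> idx \<Rightarrow> real" where
  "DRmf G dG ddG n m k i j = dRmf G dG ddG n m k i j
     + (\<Sum>p\<in>UNIV. G m n p * Rmf G dG p k i j) - (\<Sum>p\<in>UNIV. G p n k * Rmf G dG m p i j)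
     - (\<Sum>p\<in>UNIV. G p n i * Rmf G dG m k p j) - (\<Sum>p\<in>UNIV. G p n j * Rmf G dG m k i p)"

lemma bianchi2:
  assumes Gs: "\<And>m i j. G m i j = G m j i" and dGs: "\<And>n m i j. dG n m i j = dG n m j i"
    and ddGs: "\<And>n i m j k. ddG n i m j k = ddG i n m j k"
  shows "DRmf G dG ddG n m k i j + DRmf G dG ddG i m k j n + DRmf G dG ddG j m k n i = 0"
  unfolding DRmf_def dRmf_def Rmf_def
  apply (simp add: sum_3 Gs dGs ddGs)
  by algebra


lemma DRm_anti:
  "DRmf G dG ddG n m k i j = - DRmf G dG ddG n m k j i"
  unfolding DRmf_def dRmf_def Rmf_def
  apply (simp add: sum_3)
  by algebra

lemma DRm_trace:
  assumes Gs: "\<And>m i j. G m i j = G m j i"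
  shows "(\<Sum>m\<in>UNIV. DRmf G dG ddG n m k m j) = (\<Sum>m\<in>UNIV. dRmf G dG ddG n m k m j)
     - (\<Sum>l\<in>UNIV. G l n k * (\<Sum>m\<in>UNIV. Rmf G dG m l m j) + G l n j * (\<Sum>m\<in>UNIV. Rmf G dG m k m l))"
  unfolding DRmf_def
  apply (simp add: sum_3 Gs)
  by algebra

lemma cb_a:
  fixes h ric :: "idx \<Rightarrow> idx \<Rightarrow> real" and dric dh G :: "idx \<Rightarrow> idx \<Rightarrow> idx \<Rightarrow> real"
  assumes dh: "\<And>n a b. dh n a b = - (\<Sum>c\<in>UNIV. G a n c * h c b) - (\<Sum>c\<in>UNIV. G b n c * h a c)"
  shows "(\<Sum>k\<in>UNIV. \<Sum>j\<in>UNIV. h k j * (dric n k j - (\<Sum>l\<in>UNIV. G l n k * ric l j + G l n j * ric k l)))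
     = (\<Sum>k\<in>UNIV. \<Sum>j\<in>UNIV. dh n k j * ric k j + h k j * dric n k j)"
  unfolding dh
  apply (simp add: sum_3)
  by algebra


definition DRa :: "(idx \<Rightarrow> idx \<Rightarrow> idx \<Rightarrow> real) \<Rightarrow> (idx \<Rightarrow> idx \<Rightarrow> idx \<Rightarrow> idx \<Rightarrow> real) \<Rightarrow> (idx \<Rightarrow> idx \<Rightarrow> idx \<Rightarrow> idx \<Rightarrow> idx \<Rightarrow> real) \<Rightarrow> idx \<Rightarrow> idx \<Rightarrow> idx \<Rightarrow> idx \<Rightarrow> idx \<Rightarrow> real" where
  "DRa G R D n m k i j = D n m k i j
     + (\<Sum>p\<in>UNIV. G m n p * R p k i j) - (\<Sum>p\<in>UNIV. G p n k * R m p i j)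
     - (\<Sum>p\<in>UNIV. G p n i * R m k p j) - (\<Sum>p\<in>UNIV. G p n j * R m k i p)"

lemma DRmf_DRa: "DRmf G dG ddG = DRa G (Rmf G dG) (dRmf G dG ddG)"
  by (intro ext) (simp add: DRmf_def DRa_def)

lemma cb_c:
  fixes h ric :: "idx \<Rightarrow> idx \<Rightarrow> real" and dric dh G :: "idx \<Rightarrow> idx \<Rightarrow> idx \<Rightarrow> real"
    and R :: "idx \<Rightarrow> idx \<Rightarrow> idx \<Rightarrow> idx \<Rightarrow> real" and D :: "idx \<Rightarrow> idx \<Rightarrow> idx \<Rightarrow> idx \<Rightarrow> idx \<Rightarrow> real"
  assumes Gs: "\<And>m i j. G m i j = G m j i" and hs: "\<And>a b. h a b = h b a"
    and dh: "\<And>n a b. dh n a b = - (\<Sum>c\<in>UNIV. G a n c * h c b) - (\<Sum>c\<in>UNIV. G b n c * h a c)"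
    and Q: "\<And>m n. (\<Sum>k\<in>UNIV. \<Sum>j\<in>UNIV. h k j * R m k j n) = - (\<Sum>l\<in>UNIV. h m l * ric l n)"
    and dQ: "\<And>p m n. (\<Sum>k\<in>UNIV. \<Sum>j\<in>UNIV. dh p k j * R m k j n + h k j * D p m k j n)
        = - (\<Sum>l\<in>UNIV. dh p m l * ric l n + h m l * dric p l n)"
  shows "(\<Sum>m\<in>UNIV. \<Sum>k\<in>UNIV. \<Sum>j\<in>UNIV. h k j * DRa G R D m m k j n)
     = - (\<Sum>m\<in>UNIV. \<Sum>l\<in>UNIV. h m l * (dric m l n - (\<Sum>q\<in>UNIV. G q m l * ric q n + G q m n * ric l q)))"
proof -
  have s1: "(\<Sum>m\<in>UNIV. \<Sum>k\<in>UNIV. \<Sum>j\<in>UNIV. h k j * DRa G R D m m k j n)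
     = (\<Sum>m\<in>UNIV. (\<Sum>k\<in>UNIV. \<Sum>j\<in>UNIV. h k j * D m m k j n))
       + (\<Sum>m\<in>UNIV. \<Sum>p\<in>UNIV. G m m p * (\<Sum>k\<in>UNIV. \<Sum>j\<in>UNIV. h k j * R p k j n))
       - (\<Sum>m\<in>UNIV. \<Sum>k\<in>UNIV. \<Sum>j\<in>UNIV. \<Sum>p\<in>UNIV. h k j * G p m k * R m p j n)
       - (\<Sum>m\<in>UNIV. \<Sum>k\<in>UNIV. \<Sum>j\<in>UNIV. \<Sum>p\<in>UNIV. h k j * G p m j * R m k p n)
       - (\<Sum>m\<in>UNIV. \<Sum>p\<in>UNIV. G p m n * (\<Sum>k\<in>UNIV. \<Sum>j\<in>UNIV. h k j * R m k j p))"
    unfolding DRa_def by (simp add: sum_3; algebra)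
  have dQ': "(\<Sum>k\<in>UNIV. \<Sum>j\<in>UNIV. h k j * D m m k j n)
     = - (\<Sum>l\<in>UNIV. dh m m l * ric l n + h m l * dric m l n) - (\<Sum>k\<in>UNIV. \<Sum>j\<in>UNIV. dh m k j * R m k j n)" for m
    using dQ[of m m n] by (simp add: sum.distrib algebra_simps)
  show ?thesis unfolding s1 dQ' Q unfolding dh
    by (simp add: sum_3 Gs hs; algebra)
qed



lemma pd_mult_s: "smooth_on U A \<Longrightarrow> smooth_on U B \<Longrightarrow> y \<in> U \<Longrightarrow>
   pd i (\<lambda>y. A y * B y) y = pd i A y * B y + A y * pd i B y"
  by (intro pd_lder lder_mult smooth_lder)
lemma pd_add_s: "smooth_on U A \<Longrightarrow> smooth_on U B \<Longrightarrow> y \<in> U \<Longrightarrow>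
   pd i (\<lambda>y. A y + B y) y = pd i A y + pd i B y"
  by (intro pd_lder lder_add smooth_lder)
lemma pd_diff_s: "smooth_on U A \<Longrightarrow> smooth_on U B \<Longrightarrow> y \<in> U \<Longrightarrow>
   pd i (\<lambda>y. A y - B y) y = pd i A y - pd i B y"
  by (intro pd_lder lder_minus smooth_lder)
lemma pd_cmult_s: assumes "smooth_on U A" "y \<in> U" shows "pd i (\<lambda>y. c * A y) y = c * pd i A y"
proof -
  have "lder i (\<lambda>z. c * A z) y (0 * A y + c * pd i A y)"
    by (rule lder_mult[OF lder_const smooth_lder[OF assms]])
  then show ?thesis by (auto dest: pd_lder)
qed
lemma pd_sum_s: "finite S \<Longrightarrow> (\<And>a. a \<in> S \<Longrightarrow> smooth_on U (F a)) \<Longrightarrow> y \<in> U \<Longrightarrow>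
   pd i (\<lambda>y. \<Sum>a\<in>S. F a y) y = (\<Sum>a\<in>S. pd i (F a) y)"
  by (intro pd_lder lder_sum smooth_lder) auto
lemma pd_const: "pd i (\<lambda>y. c) y = 0"
  by (rule pd_lder, rule lder_const)

definition riem :: "(pt \<Rightarrow> idx \<Rightarrow> idx \<Rightarrow> real) \<Rightarrow> pt \<Rightarrow> idx \<Rightarrow> idx \<Rightarrow> idx \<Rightarrow> idx \<Rightarrow> real" where
  "riem g y m k i j = pd i (\<lambda>y. christoffel g y m j k) y - pd j (\<lambda>y. christoffel g y m i k) y
     + (\<Sum>p\<in>UNIV. christoffel g y m i p * christoffel g y p j k)
     - (\<Sum>p\<in>UNIV. christoffel g y m j p * christoffel g y p i k)"

definition riemL :: "(pt \<Rightarrow> idx \<Rightarrow> idx \<Rightarrow> real) \<Rightarrow> pt \<Rightarrow> idx \<Rightarrow> idx \<Rightarrow> idx \<Rightarrow> idx \<Rightarrow> real" where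
  "riemL g y l k i j = (\<Sum>m\<in>UNIV. g y l m * riem g y m k i j)"

lemma sum_delta1 [simp]: "(\<Sum>m\<in>(UNIV::idx set). (if k = m then 1 else 0) * X m) = (X k :: real)"
  using exhaust_3[of k] by (auto simp: sum_3)
lemma sum_delta2 [simp]: "(\<Sum>m\<in>(UNIV::idx set). X m * (if m = k then 1 else 0)) = (X k :: real)"
  using exhaust_3[of k] by (auto simp: sum_3)
lemma sum_delta3 [simp]: "(\<Sum>m\<in>(UNIV::idx set). (if m = k then 1 else 0) * X m) = (X k :: real)"
  using exhaust_3[of k] by (auto simp: sum_3)
lemma sum_delta4 [simp]: "(\<Sum>m\<in>(UNIV::idx set). X m * (if k = m then 1 else 0)) = (X k :: real)"
  using exhaust_3[of k] by (auto simp: sum_3)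

lemma contract_inv:
  fixes A B :: "idx \<Rightarrow> idx \<Rightarrow> real"
  assumes "\<And>a c. (\<Sum>b\<in>UNIV. A a b * B b c) = (if a = c then 1 else 0)"
  shows "(\<Sum>l\<in>UNIV. A k l * (\<Sum>m\<in>UNIV. B l m * X m)) = X k"
proof -
  have "(\<Sum>l\<in>UNIV. A k l * (\<Sum>m\<in>UNIV. B l m * X m)) = (\<Sum>l\<in>UNIV. \<Sum>m\<in>UNIV. A k l * B l m * X m)"
    by (simp add: sum_distrib_left mult.assoc)
  also have "\<dots> = (\<Sum>m\<in>UNIV. \<Sum>l\<in>UNIV. A k l * B l m * X m)" by (rule sum.swap)
  also have "\<dots> = (\<Sum>m\<in>UNIV. (\<Sum>l\<in>UNIV. A k l * B l m) * X m)" by (simp add: sum_distrib_right)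
  also have "\<dots> = X k" using assms by simp
  finally show ?thesis .
qed

lemma inv_solve:
  fixes A K :: "idx \<Rightarrow> real" and G H :: "idx \<Rightarrow> idx \<Rightarrow> real"
  assumes GH: "\<And>b d. (\<Sum>c\<in>UNIV. G b c * H c d) = (if b = d then 1 else 0)"
    and AK: "\<And>c. (\<Sum>b\<in>UNIV. A b * G b c) = K c"
  shows "A d = (\<Sum>c\<in>UNIV. K c * H c d)"
proof -
  have "(\<Sum>c\<in>UNIV. K c * H c d) = (\<Sum>c\<in>UNIV. (\<Sum>b\<in>UNIV. A b * G b c) * H c d)" using AK by simp
  also have "\<dots> = (\<Sum>c\<in>UNIV. \<Sum>b\<in>UNIV. A b * (G b c * H c d))"
    by (simp add: sum_distrib_right mult.assoc)
  also have "\<dots> = (\<Sum>b\<in>UNIV. \<Sum>c\<in>UNIV. A b * (G b c * H c d))" by (rule sum.swap)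
  also have "\<dots> = (\<Sum>b\<in>UNIV. A b * (\<Sum>c\<in>UNIV. G b c * H c d))" by (simp add: sum_distrib_left)
  also have "\<dots> = A d" using GH by simp
  finally show ?thesis by simp
qed

lemma contract_right:
  fixes X :: "idx \<Rightarrow> real" and G H :: "idx \<Rightarrow> idx \<Rightarrow> real"
  assumes GH: "\<And>b d. (\<Sum>c\<in>UNIV. G b c * H c d) = (if b = d then 1 else 0)"
  shows "(\<Sum>c\<in>UNIV. (\<Sum>b\<in>UNIV. X b * G b c) * H c d) = X d"
  using inv_solve[OF GH, of X "\<lambda>c. \<Sum>b\<in>UNIV. X b * G b c" d] by simp

locale MT =
  fixes U :: "pt set" and g :: "pt \<Rightarrow> idx \<Rightarrow> idx \<Rightarrow> real" and f :: "pt \<Rightarrow> real"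
  assumes U: "open U" and rm: "riem_metric_on U g" and sf: "smooth_on U f"
    and eqn: "miao_tam_eq_on U g f"
begin

lemma gsym: "y \<in> U \<Longrightarrow> g y a b = g y b a"
  using rm unfolding riem_metric_on_def by blast

lemma gsm: "smooth_on U (\<lambda>y. g y a b)"
  using rm unfolding riem_metric_on_def by blast

lemma posdef: "y \<in> U \<Longrightarrow> v \<noteq> 0 \<Longrightarrow> (\<Sum>i\<in>UNIV. \<Sum>j\<in>UNIV. g y i j * v$i * v$j) > 0"
  using rm unfolding riem_metric_on_def by blast

lemma detnz: assumes y: "y \<in> U" shows "det3 (g y) \<noteq> 0"
proof -
  let ?A = "\<chi> a b. g y a b"
  have inj: "inj (\<lambda>x. ?A *v x)"
  proof (rule injI)
    fix x z assume e: "?A *v x = ?A *v z"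
    let ?v = "x - z"
    have z: "?A *v ?v = 0" using e by (simp add: matrix_vector_mult_diff_distrib)
    have "(\<Sum>i\<in>UNIV. \<Sum>j\<in>UNIV. g y i j * ?v$i * ?v$j) = (\<Sum>i\<in>UNIV. ?v$i * (?A *v ?v)$i)"
      by (simp add: matrix_vector_mult_def sum_distrib_left algebra_simps)
    also have "\<dots> = 0" using z by simp
    finally show "x = z" using posdef[OF y, of ?v] by (metis eq_iff_diff_eq_0 less_irrefl)
  qed
  have "det (matrix (\<lambda>x. ?A *v x)) \<noteq> 0" using det_nz_iff_inj[of "\<lambda>x. ?A *v x"] inj by simp
  then have "det ?A \<noteq> 0" by simp
  moreover have "det ?A = det3 (g y)" by (simp add: det_3 det3_val algebra_simps)
  ultimately show ?thesis by simp
qed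

lemma ginv_eq: assumes y: "y \<in> U" shows "ginv g y a b = adj3 (g y) a b / det3 (g y)"
proof -
  let ?A = "\<chi> a b. g y a b" and ?B = "\<chi> a b. adj3 (g y) a b / det3 (g y)"
  have gs: "\<And>a b. g y a b = g y b a" using gsym[OF y] by blast
  have asym: "\<And>a b. adj3 (g y) a b = adj3 (g y) b a" by (rule adj3_sym[OF gs])
  have dn: "det3 (g y) \<noteq> 0" by (rule detnz[OF y])
  have AB: "?A ** ?B = mat 1"
  proof -
    have "(\<Sum>j\<in>UNIV. g y i j * (adj3 (g y) j k / det3 (g y))) = (if i = k then 1 else 0)" for i k
    proof -
      have "(\<Sum>j\<in>UNIV. g y i j * (adj3 (g y) j k / det3 (g y))) = (\<Sum>j\<in>UNIV. g y i j * adj3 (g y) k j) / det3 (g y)"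
        by (simp add: sum_divide_distrib asym)
      also have "\<dots> = (if i = k then 1 else 0)" using laplace_row[of "g y" i k] dn by auto
      finally show ?thesis .
    qed
    then show ?thesis by (simp add: matrix_matrix_mult_def mat_def vec_eq_iff)
  qed
  have BA: "?B ** ?A = mat 1"
  proof -
    have "(\<Sum>j\<in>UNIV. adj3 (g y) i j / det3 (g y) * g y j k) = (if i = k then 1 else 0)" for i k
    proof -
      have "(\<Sum>j\<in>UNIV. adj3 (g y) i j / det3 (g y) * g y j k) = (\<Sum>j\<in>UNIV. g y j k * adj3 (g y) j i) / det3 (g y)"
        by (simp add: sum_divide_distrib asym mult.commute)
      also have "\<dots> = (if i = k then 1 else 0)" using laplace_col[of "g y" k i] dn by auto
      finally show ?thesis .
    qed
    then show ?thesis by (simp add: matrix_matrix_mult_def mat_def vec_eq_iff)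
  qed
  have ex: "\<exists>C. ?A ** C = mat 1 \<and> C ** ?A = mat 1" using AB BA by blast
  let ?C = "matrix_inv ?A"
  have C: "?A ** ?C = mat 1 \<and> ?C ** ?A = mat 1"
    unfolding matrix_inv_def by (rule someI_ex[OF ex])
  have "?C = ?C ** (?A ** ?B)" using AB by (simp add: matrix_mul_rid)
  also have "\<dots> = (?C ** ?A) ** ?B" by (simp add: matrix_mul_assoc)
  also have "\<dots> = ?B" using C by (simp add: matrix_mul_lid)
  finally have "?C = ?B" .
  then show ?thesis unfolding ginv_def by simp
qed

lemma adjsm: "smooth_on U (\<lambda>y. adj3 (g y) a b)"
  unfolding adj3_def by (intro smooth_diff smooth_mult gsm U)

lemma detsm: "smooth_on U (\<lambda>y. det3 (g y))"
  unfolding det3_def by (intro smooth_sum smooth_mult gsm adjsm U finite)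

lemma hsm: "smooth_on U (\<lambda>y. ginv g y a b)"
proof (rule smooth_cong[OF U])
  show "smooth_on U (\<lambda>y. adj3 (g y) a b / det3 (g y))"
    using detnz by (intro smooth_divide adjsm detsm U) auto
  show "\<forall>y\<in>U. ginv g y a b = adj3 (g y) a b / det3 (g y)" using ginv_eq by blast
qed

lemma hsym: "y \<in> U \<Longrightarrow> ginv g y a b = ginv g y b a"
  using ginv_eq adj3_sym gsym by metis

lemma hg: assumes y: "y \<in> U" shows "(\<Sum>b\<in>UNIV. ginv g y a b * g y b c) = (if a = c then 1 else 0)"
proof -
  have asym: "\<And>a b. adj3 (g y) a b = adj3 (g y) b a" by (rule adj3_sym) (use gsym[OF y] in blast)
  have "(\<Sum>b\<in>UNIV. ginv g y a b * g y b c) = (\<Sum>b\<in>UNIV. g y b c * adj3 (g y) b a) / det3 (g y)"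
    using y by (simp add: ginv_eq sum_divide_distrib asym mult.commute)
  also have "\<dots> = (if a = c then 1 else 0)" using laplace_col[of "g y" c a] detnz[OF y] by auto
  finally show ?thesis .
qed

lemma gh: assumes y: "y \<in> U" shows "(\<Sum>b\<in>UNIV. g y a b * ginv g y b c) = (if a = c then 1 else 0)"
proof -
  have "(\<Sum>b\<in>UNIV. g y a b * ginv g y b c) = (\<Sum>b\<in>UNIV. ginv g y c b * g y b a)"
    using y by (simp add: gsym hsym mult.commute)
  then show ?thesis using hg[OF y, of c a] by auto
qed

lemma christ_sm: "smooth_on U (\<lambda>y. christoffel g y k i j)"
  unfolding christoffel_def
  by (intro smooth_cmult smooth_sum smooth_mult smooth_add smooth_diff hsm smooth_pd gsm U finite)

lemma dgsym: "y \<in> U \<Longrightarrow> pd i (\<lambda>y. g y a b) y = pd i (\<lambda>y. g y b a) y"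
  by (rule pd_local[OF U]) (auto simp: gsym)

lemma christ_sym: "y \<in> U \<Longrightarrow> christoffel g y k i j = christoffel g y k j i"
  unfolding christoffel_def by (simp add: dgsym[of y _ i j] algebra_simps)

lemma lowc: assumes y: "y \<in> U"
  shows "(\<Sum>l\<in>UNIV. g y k l * christoffel g y l i j)
     = (pd i (\<lambda>y. g y j k) y + pd j (\<lambda>y. g y i k) y - pd k (\<lambda>y. g y i j) y) / 2"
proof -
  define X where "X m = pd i (\<lambda>y. g y j m) y + pd j (\<lambda>y. g y i m) y - pd m (\<lambda>y. g y i j) y" for m
  have "(\<Sum>l\<in>UNIV. g y k l * christoffel g y l i j)
     = (1/2) * (\<Sum>l\<in>UNIV. g y k l * (\<Sum>m\<in>UNIV. ginv g y l m * X m))"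
    unfolding christoffel_def X_def by (simp add: sum_distrib_left mult.left_commute)
  also have "\<dots> = (1/2) * X k"
    by (subst contract_inv[where X=X], rule gh[OF y], rule refl)
  finally show ?thesis by (simp add: X_def)
qed

lemma mcompat: assumes y: "y \<in> U"
  shows "pd i (\<lambda>y. g y j k) y = (\<Sum>l\<in>UNIV. christoffel g y l i j * g y l k) + (\<Sum>l\<in>UNIV. christoffel g y l i k * g y j l)"
proof -
  have "(\<Sum>l\<in>UNIV. christoffel g y l i j * g y l k) = (\<Sum>l\<in>UNIV. g y k l * christoffel g y l i j)"
    using y by (simp add: gsym mult.commute)
  moreover have "(\<Sum>l\<in>UNIV. christoffel g y l i k * g y j l) = (\<Sum>l\<in>UNIV. g y j l * christoffel g y l i k)"
    by (simp add: mult.commute)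
  ultimately show ?thesis using lowc[OF y, of k i j] lowc[OF y, of j i k] dgsym[OF y, of i j k] dgsym[OF y, of k i j]
    dgsym[OF y, of j i k]
    by simp
qed

lemma pd_hg: assumes y: "y \<in> U"
  shows "(\<Sum>b\<in>UNIV. pd m (\<lambda>y. ginv g y a b) y * g y b c + ginv g y a b * pd m (\<lambda>y. g y b c) y) = 0"
proof -
  have "pd m (\<lambda>y. \<Sum>b\<in>UNIV. ginv g y a b * g y b c) y = pd m (\<lambda>y. if a = c then 1 else 0) y"
    by (rule pd_local[OF U y]) (simp add: hg)
  also have "\<dots> = 0" by (rule pd_const)
  moreover have "pd m (\<lambda>y. \<Sum>b\<in>UNIV. ginv g y a b * g y b c) y = (\<Sum>b\<in>UNIV. pd m (\<lambda>y. ginv g y a b * g y b c) y)"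
    by (rule pd_sum_s[OF _ _ y]) (auto intro: smooth_mult hsm gsm U)
  moreover have "pd m (\<lambda>y. ginv g y a b * g y b c) y = pd m (\<lambda>y. ginv g y a b) y * g y b c + ginv g y a b * pd m (\<lambda>y. g y b c) y" for b
    by (rule pd_mult_s[OF hsm gsm y])
  ultimately show ?thesis by simp
qed

lemma dh: assumes y: "y \<in> U"
  shows "pd m (\<lambda>y. ginv g y a d) y =
    - (\<Sum>c\<in>UNIV. christoffel g y a m c * ginv g y c d) - (\<Sum>c\<in>UNIV. christoffel g y d m c * ginv g y a c)"
proof -
  let ?G = "christoffel g y" and ?h = "ginv g y" and ?g = "g y"
  have e1: "pd m (\<lambda>y. ginv g y a d) y = (\<Sum>c\<in>UNIV. (- (\<Sum>b\<in>UNIV. ?h a b * pd m (\<lambda>y. g y b c) y)) * ?h c d)"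
  proof (rule inv_solve[where G="?g"])
    show "\<And>b d. (\<Sum>c\<in>UNIV. ?g b c * ?h c d) = (if b = d then 1 else 0)" by (rule gh[OF y])
    show "(\<Sum>b\<in>UNIV. pd m (\<lambda>y. ginv g y a b) y * ?g b c) = - (\<Sum>b\<in>UNIV. ?h a b * pd m (\<lambda>y. g y b c) y)" for c
      using pd_hg[OF y, of m a c] by (simp add: sum.distrib eq_neg_iff_add_eq_0)
  qed
  have p1: "(\<Sum>c\<in>UNIV. (\<Sum>b\<in>UNIV. ?h a b * (\<Sum>l\<in>UNIV. ?G l m b * ?g l c)) * ?h c d) = (\<Sum>b\<in>UNIV. ?h a b * ?G d m b)"
  proof -
    have "(\<Sum>c\<in>UNIV. (\<Sum>b\<in>UNIV. ?h a b * (\<Sum>l\<in>UNIV. ?G l m b * ?g l c)) * ?h c d)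
       = (\<Sum>c\<in>UNIV. (\<Sum>l\<in>UNIV. (\<Sum>b\<in>UNIV. ?h a b * ?G l m b) * ?g l c) * ?h c d)"
    proof -
      have "(\<Sum>b\<in>UNIV. ?h a b * (\<Sum>l\<in>UNIV. ?G l m b * ?g l c)) = (\<Sum>l\<in>UNIV. (\<Sum>b\<in>UNIV. ?h a b * ?G l m b) * ?g l c)" for c
        by (simp add: sum_distrib_left sum_distrib_right mult.assoc) (rule sum.swap)
      then show ?thesis by simp
    qed
    also have "\<dots> = (\<Sum>b\<in>UNIV. ?h a b * ?G d m b)" by (rule contract_right[OF gh[OF y]])
    finally show ?thesis .
  qed
  have p2: "(\<Sum>c\<in>UNIV. (\<Sum>b\<in>UNIV. ?h a b * (\<Sum>l\<in>UNIV. ?G l m c * ?g b l)) * ?h c d) = (\<Sum>c\<in>UNIV. ?G a m c * ?h c d)"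
  proof -
    have "(\<Sum>b\<in>UNIV. ?h a b * (\<Sum>l\<in>UNIV. ?G l m c * ?g b l)) = ?G a m c" for c
    proof -
      have "(\<Sum>b\<in>UNIV. ?h a b * (\<Sum>l\<in>UNIV. ?G l m c * ?g b l)) = (\<Sum>l\<in>UNIV. (\<Sum>b\<in>UNIV. ?h a b * ?g b l) * ?G l m c)"
        by (simp add: sum_distrib_left sum_distrib_right mult.commute mult.left_commute) (rule sum.swap)
      also have "\<dots> = ?G a m c" using hg[OF y] by simp
      finally show ?thesis .
    qed
    then show ?thesis by simp
  qed
  have "pd m (\<lambda>y. ginv g y a d) y = - (\<Sum>c\<in>UNIV. (\<Sum>b\<in>UNIV. ?h a b * (\<Sum>l\<in>UNIV. ?G l m b * ?g l c)) * ?h c d)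
         - (\<Sum>c\<in>UNIV. (\<Sum>b\<in>UNIV. ?h a b * (\<Sum>l\<in>UNIV. ?G l m c * ?g b l)) * ?h c d)"
    unfolding e1 using y by (simp add: mcompat distrib_left sum.distrib distrib_right sum_negf left_diff_distrib sum_subtractf)
  also have "\<dots> = - (\<Sum>c\<in>UNIV. ?G a m c * ?h c d) - (\<Sum>c\<in>UNIV. ?G d m c * ?h a c)"
    unfolding p1 p2 by (simp add: mult.commute)
  finally show ?thesis .
qed

end

lemma contracted_bianchi:
  fixes h :: "idx \<Rightarrow> idx \<Rightarrow> real" and dh G :: "idx \<Rightarrow> idx \<Rightarrow> idx \<Rightarrow> real"
  assumes Gs: "\<And>m i j. G m i j = G m j i" and dGs: "\<And>n m i j. dG n m i j = dG n m j i"
    and ddGs: "\<And>n i m j k. ddG n i m j k = ddG i n m j k"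
    and hs: "\<And>a b. h a b = h b a"
    and dh: "\<And>n a b. dh n a b = - (\<Sum>c\<in>UNIV. G a n c * h c b) - (\<Sum>c\<in>UNIV. G b n c * h a c)"
    and Q: "\<And>m n. (\<Sum>k\<in>UNIV. \<Sum>j\<in>UNIV. h k j * Rmf G dG m k j n) = - (\<Sum>l\<in>UNIV. h m l * ric l n)"
    and dQ: "\<And>p m n. (\<Sum>k\<in>UNIV. \<Sum>j\<in>UNIV. dh p k j * Rmf G dG m k j n + h k j * dRmf G dG ddG p m k j n)
        = - (\<Sum>l\<in>UNIV. dh p m l * ric l n + h m l * dric p l n)"
    and ric: "\<And>l n. ric l n = (\<Sum>q\<in>UNIV. Rmf G dG q l q n)"
    and dric: "\<And>p l n. dric p l n = (\<Sum>q\<in>UNIV. dRmf G dG ddG p q l q n)"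
  shows "(\<Sum>k\<in>UNIV. \<Sum>j\<in>UNIV. dh n k j * ric k j + h k j * dric n k j)
     = 2 * (\<Sum>k\<in>UNIV. \<Sum>j\<in>UNIV. h k j * (dric j k n - (\<Sum>l\<in>UNIV. G l j k * ric l n + G l j n * ric k l)))"
proof -
  define Dric where "Dric a b c = dric a b c - (\<Sum>l\<in>UNIV. G l a b * ric l c + G l a c * ric b l)" for a b c
  have tr: "(\<Sum>m\<in>UNIV. DRmf G dG ddG a m b m c) = Dric a b c" for a b c
    unfolding DRm_trace[OF Gs] Dric_def ric dric ..
  have b: "Dric n k j + (\<Sum>m\<in>UNIV. DRmf G dG ddG m m k j n) - Dric j k n = 0" for k j
  proof -
    have "(\<Sum>m\<in>UNIV. DRmf G dG ddG n m k m j + DRmf G dG ddG m m k j n + DRmf G dG ddG j m k n m) = 0"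
      using bianchi2[OF Gs dGs ddGs] by simp
    moreover have "DRmf G dG ddG j m k n m = - DRmf G dG ddG j m k m n" for m by (rule DRm_anti)
    ultimately show ?thesis by (simp add: sum.distrib sum_subtractf tr)
  qed
  have a: "(\<Sum>k\<in>UNIV. \<Sum>j\<in>UNIV. h k j * Dric n k j) = (\<Sum>k\<in>UNIV. \<Sum>j\<in>UNIV. dh n k j * ric k j + h k j * dric n k j)"
    unfolding Dric_def by (rule cb_a[OF dh])
  have c: "(\<Sum>m\<in>UNIV. \<Sum>k\<in>UNIV. \<Sum>j\<in>UNIV. h k j * DRmf G dG ddG m m k j n) = - (\<Sum>m\<in>UNIV. \<Sum>l\<in>UNIV. h m l * Dric m l n)"
    unfolding DRmf_DRa Dric_def by (rule cb_c[OF Gs hs dh Q dQ])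
  have c': "(\<Sum>k\<in>UNIV. \<Sum>j\<in>UNIV. h k j * (\<Sum>m\<in>UNIV. DRmf G dG ddG m m k j n)) = - (\<Sum>k\<in>UNIV. \<Sum>j\<in>UNIV. h k j * Dric j k n)"
  proof -
    have "(\<Sum>k\<in>UNIV. \<Sum>j\<in>UNIV. h k j * (\<Sum>m\<in>UNIV. DRmf G dG ddG m m k j n)) = (\<Sum>m\<in>UNIV. \<Sum>k\<in>UNIV. \<Sum>j\<in>UNIV. h k j * DRmf G dG ddG m m k j n)"
    proof -
      have e: "(\<Sum>j\<in>UNIV. h k j * (\<Sum>m\<in>UNIV. DRmf G dG ddG m m k j n)) = (\<Sum>m\<in>UNIV. \<Sum>j\<in>UNIV. h k j * DRmf G dG ddG m m k j n)" for k
        by (simp add: sum_distrib_left) (rule sum.swap)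
      have "(\<Sum>k\<in>UNIV. \<Sum>j\<in>UNIV. h k j * (\<Sum>m\<in>UNIV. DRmf G dG ddG m m k j n)) = (\<Sum>k\<in>UNIV. \<Sum>m\<in>UNIV. \<Sum>j\<in>UNIV. h k j * DRmf G dG ddG m m k j n)"
        by (simp add: e)
      also have "\<dots> = (\<Sum>m\<in>UNIV. \<Sum>k\<in>UNIV. \<Sum>j\<in>UNIV. h k j * DRmf G dG ddG m m k j n)"
        by (rule sum.swap)
      finally show ?thesis .
    qed
    also have "\<dots> = - (\<Sum>m\<in>UNIV. \<Sum>l\<in>UNIV. h m l * Dric m l n)" by (rule c)
    also have "(\<Sum>m\<in>UNIV. \<Sum>l\<in>UNIV. h m l * Dric m l n) = (\<Sum>k\<in>UNIV. \<Sum>j\<in>UNIV. h k j * Dric j k n)"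
      by (subst sum.swap) (simp add: hs)
    finally show ?thesis .
  qed
  have "(\<Sum>k\<in>UNIV. \<Sum>j\<in>UNIV. h k j * (Dric n k j + (\<Sum>m\<in>UNIV. DRmf G dG ddG m m k j n) - Dric j k n)) = 0"
    using b by simp
  then have "(\<Sum>k\<in>UNIV. \<Sum>j\<in>UNIV. h k j * Dric n k j) + (\<Sum>k\<in>UNIV. \<Sum>j\<in>UNIV. h k j * (\<Sum>m\<in>UNIV. DRmf G dG ddG m m k j n))
     - (\<Sum>k\<in>UNIV. \<Sum>j\<in>UNIV. h k j * Dric j k n) = 0"
    by (simp add: algebra_simps sum.distrib sum_subtractf)
  then have "(\<Sum>k\<in>UNIV. \<Sum>j\<in>UNIV. h k j * Dric n k j) = 2 * (\<Sum>k\<in>UNIV. \<Sum>j\<in>UNIV. h k j * Dric j k n)"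
    unfolding c' by simp
  then show ?thesis unfolding a by (simp add: Dric_def)
qed


lemma fdelta [simp]: "(\<Sum>m\<in>(UNIV::idx set). X m * (if m = k then 1 else 0)) = (X k :: real)"
  "(\<Sum>m\<in>(UNIV::idx set). (if m = k then 1 else 0) * X m) = (X k :: real)"
  "(\<Sum>m\<in>(UNIV::idx set). X m * (if k = m then 1 else 0)) = (X k :: real)"
  "(\<Sum>m\<in>(UNIV::idx set). (if k = m then 1 else 0) * X m) = (X k :: real)"
  using exhaust_3[of k] by (auto simp: sum_3)

lemma mv3: fixes F :: "idx \<Rightarrow> idx \<Rightarrow> idx \<Rightarrow> idx \<Rightarrow> real" shows "(\<Sum>k\<in>UNIV. \<Sum>a\<in>UNIV. \<Sum>b\<in>UNIV. \<Sum>c\<in>UNIV. F k a b c) = (\<Sum>a\<in>UNIV. \<Sum>b\<in>UNIV. \<Sum>c\<in>UNIV. \<Sum>k\<in>(UNIV::idx set). (F k a b c :: real))"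
proof -
  have "(\<Sum>k\<in>UNIV. \<Sum>a\<in>UNIV. \<Sum>b\<in>UNIV. \<Sum>c\<in>UNIV. F k a b c) = (\<Sum>a\<in>UNIV. \<Sum>k\<in>(UNIV::idx set). \<Sum>b\<in>UNIV. \<Sum>c\<in>UNIV. F k a b c)"
    by (rule sum.swap)
  also have "\<dots> = (\<Sum>a\<in>UNIV. \<Sum>b\<in>UNIV. \<Sum>k\<in>(UNIV::idx set). \<Sum>c\<in>UNIV. F k a b c)"
    by (rule sum.cong[OF refl], rule sum.swap)
  also have "\<dots> = (\<Sum>a\<in>UNIV. \<Sum>b\<in>UNIV. \<Sum>c\<in>UNIV. \<Sum>k\<in>(UNIV::idx set). F k a b c)"
    by (rule sum.cong[OF refl], rule sum.cong[OF refl], rule sum.swap)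
  finally show ?thesis .
qed

lemma mv33: fixes F :: "idx \<Rightarrow> idx \<Rightarrow> idx \<Rightarrow> idx \<Rightarrow> idx \<Rightarrow> idx \<Rightarrow> real" shows "(\<Sum>i\<in>UNIV. \<Sum>j\<in>UNIV. \<Sum>k\<in>UNIV. \<Sum>a\<in>UNIV. \<Sum>b\<in>UNIV. \<Sum>c\<in>UNIV. F i j k a b c)
  = (\<Sum>a\<in>UNIV. \<Sum>b\<in>UNIV. \<Sum>c\<in>UNIV. \<Sum>i\<in>UNIV. \<Sum>j\<in>UNIV. \<Sum>k\<in>(UNIV::idx set). (F i j k a b c :: real))"
proof -
  have "(\<Sum>i\<in>UNIV. \<Sum>j\<in>UNIV. \<Sum>k\<in>UNIV. \<Sum>a\<in>UNIV. \<Sum>b\<in>UNIV. \<Sum>c\<in>UNIV. F i j k a b c)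
     = (\<Sum>i\<in>UNIV. \<Sum>j\<in>UNIV. \<Sum>a\<in>UNIV. \<Sum>b\<in>UNIV. \<Sum>c\<in>UNIV. \<Sum>k\<in>(UNIV::idx set). F i j k a b c)"
    by (rule sum.cong[OF refl], rule sum.cong[OF refl], rule mv3)
  also have "\<dots> = (\<Sum>i\<in>UNIV. \<Sum>a\<in>UNIV. \<Sum>b\<in>UNIV. \<Sum>c\<in>UNIV. \<Sum>j\<in>UNIV. \<Sum>k\<in>(UNIV::idx set). F i j k a b c)"
  proof -
    have "(\<Sum>j\<in>UNIV. \<Sum>a\<in>UNIV. \<Sum>b\<in>UNIV. \<Sum>c\<in>UNIV. \<Sum>k\<in>(UNIV::idx set). F i j k a b c)
       = (\<Sum>a\<in>UNIV. \<Sum>b\<in>UNIV. \<Sum>c\<in>UNIV. \<Sum>j\<in>UNIV. \<Sum>k\<in>(UNIV::idx set). F i j k a b c)" for i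
      using mv3[of "\<lambda>j a b c. \<Sum>k\<in>UNIV. F i j k a b c"] by simp
    then show ?thesis by simp
  qed
  also have "\<dots> = (\<Sum>a\<in>UNIV. \<Sum>b\<in>UNIV. \<Sum>c\<in>UNIV. \<Sum>i\<in>UNIV. \<Sum>j\<in>UNIV. \<Sum>k\<in>(UNIV::idx set). F i j k a b c)"
    by (rule mv3)
  finally show ?thesis .
qed

lemma raise2:
  fixes h g :: "idx \<Rightarrow> idx \<Rightarrow> real"
  assumes hs: "\<And>a b. h a b = h b a" and gh: "\<And>a c. (\<Sum>b\<in>UNIV. g a b * h b c) = (if a = c then 1 else 0)"
  shows "(\<Sum>b\<in>UNIV. \<Sum>c\<in>UNIV. h j b * h k c * g b c) = h j k"
proof -
  have "(\<Sum>b\<in>UNIV. \<Sum>c\<in>UNIV. h j b * h k c * g b c) = (\<Sum>b\<in>UNIV. h j b * (\<Sum>c\<in>UNIV. g b c * h c k))"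
    by (simp add: sum_distrib_left hs mult.commute mult.left_commute)
  also have "\<dots> = (\<Sum>b\<in>UNIV. h j b * (if b = k then 1 else 0))"
    using gh by simp
  also have "\<dots> = h j k" by simp
  finally show ?thesis .
qed


lemma sum3_factor: "(\<Sum>i\<in>UNIV. \<Sum>j\<in>UNIV. \<Sum>k\<in>UNIV. A i * B j k) = (\<Sum>i\<in>(UNIV::idx set). A i) * (\<Sum>j\<in>(UNIV::idx set). \<Sum>k\<in>(UNIV::idx set). (B j k :: real))"
  by (subst sum_distrib_right) (simp add: sum_distrib_left)

lemma FIN:
  fixes g h Ric :: "idx \<Rightarrow> idx \<Rightarrow> real" and DR :: "idx \<Rightarrow> idx \<Rightarrow> idx \<Rightarrow> real"
    and ds f1 w :: "idx \<Rightarrow> real" and fx s :: real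
  assumes hs: "\<And>a b. h a b = h b a" and gs: "\<And>a b. g a b = g b a"
    and gh: "\<And>a c. (\<Sum>b\<in>UNIV. g a b * h b c) = (if a = c then 1 else 0)"
    and DRs: "\<And>i j k. DR i j k = DR i k j"
    and tr1: "\<And>n. (\<Sum>k\<in>UNIV. \<Sum>j\<in>UNIV. h k j * DR j k n) = ds n / 2"
    and tr2: "\<And>n. (\<Sum>k\<in>UNIV. \<Sum>j\<in>UNIV. h k j * DR n k j) = ds n"
    and main: "\<And>i j k. fx * (DR i j k - DR j i k) = -2 * (f1 i * Ric j k - f1 j * Ric i k) + g j k * w i - g i k * w j"
  defines "C \<equiv> \<lambda>i j k. DR i j k - DR j i k - 1/4 * (ds i * g j k - ds j * g i k)"
  shows "fx\<^sup>2 * (\<Sum>i\<in>UNIV. \<Sum>j\<in>UNIV. \<Sum>k\<in>UNIV. \<Sum>a\<in>UNIV. \<Sum>b\<in>UNIV. \<Sum>c\<in>UNIV.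
        h i a * h j b * h k c * C i j k * C a b c) =
     - 4 * fx * (\<Sum>i\<in>UNIV. \<Sum>j\<in>UNIV. \<Sum>k\<in>UNIV. C i j k * (\<Sum>a\<in>UNIV. h i a * f1 a)
         * (\<Sum>b\<in>UNIV. \<Sum>c\<in>UNIV. h j b * h k c * (Ric b c - s / 3 * g b c)))"
proof -
  have Canti: "C i j k = - C j i k" for i j k unfolding C_def by (simp add: algebra_simps)
  have hgtr: "(\<Sum>j\<in>UNIV. \<Sum>k\<in>UNIV. h j k * g j k) = 3"
  proof -
    have "(\<Sum>j\<in>UNIV. \<Sum>k\<in>UNIV. h j k * g j k) = (\<Sum>j\<in>(UNIV::idx set). \<Sum>k\<in>UNIV. g j k * h k j)"
      by (simp add: hs mult.commute)
    also have "\<dots> = (\<Sum>j\<in>(UNIV::idx set). 1)" using gh by simp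
    finally show ?thesis by simp
  qed
  have trC: "(\<Sum>b\<in>UNIV. \<Sum>c\<in>UNIV. h b c * C a b c) = 0" for a
  proof -
    have t1: "(\<Sum>b\<in>UNIV. \<Sum>c\<in>UNIV. h b c * DR a b c) = ds a" using tr2[of a] .
    have t2: "(\<Sum>b\<in>UNIV. \<Sum>c\<in>UNIV. h b c * DR b a c) = ds a / 2"
    proof -
      have "(\<Sum>b\<in>UNIV. \<Sum>c\<in>UNIV. h b c * DR b a c) = (\<Sum>b\<in>UNIV. \<Sum>c\<in>UNIV. h b c * DR b c a)"
        by (simp add: DRs[of _ a])
      also have "\<dots> = (\<Sum>k\<in>UNIV. \<Sum>j\<in>UNIV. h k j * DR j k a)"
        by (subst sum.swap) (simp add: hs)
      finally show ?thesis using tr1[of a] by simp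
    qed
    have t3: "(\<Sum>b\<in>UNIV. \<Sum>c\<in>UNIV. h b c * (ds a * g b c)) = 3 * ds a"
      using hgtr by (simp add: sum_distrib_left[symmetric] mult.commute mult.left_commute sum_distrib_right[symmetric])
    have t4: "(\<Sum>b\<in>UNIV. \<Sum>c\<in>UNIV. h b c * (ds b * g a c)) = ds a"
    proof -
      have "(\<Sum>b\<in>UNIV. \<Sum>c\<in>UNIV. h b c * (ds b * g a c)) = (\<Sum>b\<in>UNIV. ds b * (\<Sum>c\<in>UNIV. g a c * h c b))"
        by (simp add: sum_distrib_left hs mult.commute mult.left_commute)
      then show ?thesis using gh by simp
    qed
    have "(\<Sum>b\<in>UNIV. \<Sum>c\<in>UNIV. h b c * C a b c) = (\<Sum>b\<in>UNIV. \<Sum>c\<in>UNIV. h b c * DR a b c)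
      - (\<Sum>b\<in>UNIV. \<Sum>c\<in>UNIV. h b c * DR b a c) - 1/4 * ((\<Sum>b\<in>UNIV. \<Sum>c\<in>UNIV. h b c * (ds a * g b c))
      - (\<Sum>b\<in>UNIV. \<Sum>c\<in>UNIV. h b c * (ds b * g a c)))"
      unfolding C_def by (simp add: algebra_simps sum.distrib sum_subtractf sum_distrib_left)
    then show ?thesis unfolding t1 t2 t3 t4 by simp
  qed
  define Cu where "Cu i j k = (\<Sum>a\<in>UNIV. \<Sum>b\<in>UNIV. \<Sum>c\<in>UNIV. h i a * h j b * h k c * C a b c)" for i j k
  define K where "K E a b c = (\<Sum>i\<in>UNIV. \<Sum>j\<in>UNIV. \<Sum>k\<in>UNIV. h i a * h j b * h k c * E i j k)" for E a b c
  have swapCu: "(\<Sum>i\<in>UNIV. \<Sum>j\<in>UNIV. \<Sum>k\<in>UNIV. E i j k * Cu i j k) = (\<Sum>a\<in>UNIV. \<Sum>b\<in>UNIV. \<Sum>c\<in>UNIV. C a b c * K E a b c)" for E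
  proof -
    have "(\<Sum>i\<in>UNIV. \<Sum>j\<in>UNIV. \<Sum>k\<in>UNIV. E i j k * Cu i j k)
       = (\<Sum>i\<in>UNIV. \<Sum>j\<in>UNIV. \<Sum>k\<in>UNIV. \<Sum>a\<in>UNIV. \<Sum>b\<in>UNIV. \<Sum>c\<in>UNIV. C a b c * (h i a * h j b * h k c * E i j k))"
      unfolding Cu_def by (simp add: sum_distrib_left mult.commute mult.left_commute)
    also have "\<dots> = (\<Sum>a\<in>UNIV. \<Sum>b\<in>UNIV. \<Sum>c\<in>UNIV. \<Sum>i\<in>UNIV. \<Sum>j\<in>UNIV. \<Sum>k\<in>UNIV. C a b c * (h i a * h j b * h k c * E i j k))"
      by (rule mv33)
    also have "\<dots> = (\<Sum>a\<in>UNIV. \<Sum>b\<in>UNIV. \<Sum>c\<in>UNIV. C a b c * K E a b c)"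
      unfolding K_def by (simp add: sum_distrib_left)
    finally show ?thesis .
  qed
  have N: "(\<Sum>i\<in>UNIV. \<Sum>j\<in>UNIV. \<Sum>k\<in>UNIV. \<Sum>a\<in>UNIV. \<Sum>b\<in>UNIV. \<Sum>c\<in>UNIV.
        h i a * h j b * h k c * C i j k * C a b c) = (\<Sum>i\<in>UNIV. \<Sum>j\<in>UNIV. \<Sum>k\<in>UNIV. C i j k * Cu i j k)"
    unfolding Cu_def by (simp add: sum_distrib_left mult.commute mult.left_commute)
  have K1: "K (\<lambda>i j k. g j k * X i) a b c = (\<Sum>i\<in>UNIV. h i a * X i) * h b c" for X a b c
  proof -
    have "K (\<lambda>i j k. g j k * X i) a b c = (\<Sum>i\<in>UNIV. \<Sum>j\<in>UNIV. \<Sum>k\<in>UNIV. (h i a * X i) * (h b j * h c k * g j k))"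
      unfolding K_def by (simp add: hs mult.commute mult.left_commute)
    also have "\<dots> = (\<Sum>i\<in>UNIV. h i a * X i) * h b c"
      unfolding sum3_factor raise2[OF hs gh] ..
    finally show ?thesis .
  qed
  have K2: "K (\<lambda>i j k. g i k * X j) a b c = (\<Sum>j\<in>UNIV. h j b * X j) * h a c" for X a b c
  proof -
    have "K (\<lambda>i j k. g i k * X j) a b c = (\<Sum>i\<in>UNIV. \<Sum>j\<in>UNIV. \<Sum>k\<in>UNIV. (h j b * X j) * (h a i * h c k * g i k))"
      unfolding K_def by (simp add: hs mult.commute mult.left_commute)
    also have "\<dots> = (\<Sum>j\<in>UNIV. \<Sum>i\<in>UNIV. \<Sum>k\<in>UNIV. (h j b * X j) * (h a i * h c k * g i k))"
      by (rule sum.swap)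
    also have "\<dots> = (\<Sum>j\<in>UNIV. h j b * X j) * h a c"
      unfolding sum3_factor raise2[OF hs gh] ..
    finally show ?thesis .
  qed
  have Z1: "(\<Sum>a\<in>UNIV. \<Sum>b\<in>UNIV. \<Sum>c\<in>UNIV. C a b c * (Y a * h b c)) = 0" for Y
  proof -
    have "(\<Sum>a\<in>UNIV. \<Sum>b\<in>UNIV. \<Sum>c\<in>UNIV. C a b c * (Y a * h b c)) = (\<Sum>a\<in>UNIV. Y a * (\<Sum>b\<in>UNIV. \<Sum>c\<in>UNIV. h b c * C a b c))"
      by (simp add: sum_distrib_left mult.commute mult.left_commute)
    then show ?thesis using trC by simp
  qed
  have Z2: "(\<Sum>a\<in>UNIV. \<Sum>b\<in>UNIV. \<Sum>c\<in>UNIV. C a b c * (Y b * h a c)) = 0" for Y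
  proof -
    have "(\<Sum>a\<in>UNIV. \<Sum>b\<in>UNIV. \<Sum>c\<in>UNIV. C a b c * (Y b * h a c)) = (\<Sum>b\<in>UNIV. \<Sum>a\<in>UNIV. \<Sum>c\<in>UNIV. C a b c * (Y b * h a c))"
      by (rule sum.swap)
    also have "\<dots> = - (\<Sum>b\<in>UNIV. \<Sum>a\<in>UNIV. \<Sum>c\<in>UNIV. C b a c * (Y b * h a c))"
    proof -
      have e: "C a b c * (Y b * h a c) = - (C b a c * (Y b * h a c))" for a b c using Canti[of a b c] by simp
      show ?thesis by (simp only: e sum_negf)
    qed
    also have "\<dots> = 0" using Z1 by simp
    finally show ?thesis .
  qed
  have Cuanti: "Cu i j k = - Cu j i k" for i j k
  proof -
    have "Cu j i k = (\<Sum>b\<in>UNIV. \<Sum>a\<in>UNIV. \<Sum>c\<in>UNIV. h i a * h j b * h k c * C b a c)"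
      unfolding Cu_def by (simp add: mult.commute mult.left_commute)
    also have "\<dots> = (\<Sum>a\<in>UNIV. \<Sum>b\<in>UNIV. \<Sum>c\<in>UNIV. h i a * h j b * h k c * C b a c)" by (rule sum.swap)
    also have "\<dots> = - Cu i j k"
    proof -
      have e: "h i a * h j b * h k c * C b a c = - (h i a * h j b * h k c * C a b c)" for a b c using Canti[of b a c] by simp
      show ?thesis unfolding Cu_def by (simp only: e sum_negf)
    qed
    finally show ?thesis by simp
  qed
  have A: "(\<Sum>i\<in>UNIV. \<Sum>j\<in>UNIV. \<Sum>k\<in>UNIV. (f1 j * Ric i k) * Cu i j k) = - (\<Sum>i\<in>UNIV. \<Sum>j\<in>UNIV. \<Sum>k\<in>UNIV. (f1 i * Ric j k) * Cu i j k)"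
  proof -
    have "(\<Sum>i\<in>UNIV. \<Sum>j\<in>UNIV. \<Sum>k\<in>UNIV. (f1 j * Ric i k) * Cu i j k) = (\<Sum>j\<in>UNIV. \<Sum>i\<in>UNIV. \<Sum>k\<in>UNIV. (f1 j * Ric i k) * Cu i j k)"
      by (rule sum.swap)
    also have "\<dots> = - (\<Sum>i\<in>UNIV. \<Sum>j\<in>UNIV. \<Sum>k\<in>UNIV. (f1 i * Ric j k) * Cu i j k)"
    proof -
      have e: "(f1 j * Ric i k) * Cu i j k = - ((f1 j * Ric i k) * Cu j i k)" for i j k using Cuanti[of i j k] by simp
      show ?thesis by (simp only: e sum_negf)
    qed
    finally show ?thesis .
  qed
  define u where "u i = w i - fx * ds i / 4" for i
  have fC: "fx * C i j k = -2 * (f1 i * Ric j k - f1 j * Ric i k) + g j k * u i - g i k * u j" for i j k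
    using main[of i j k] unfolding C_def u_def by (simp add: algebra_simps)
  have G1: "(\<Sum>i\<in>UNIV. \<Sum>j\<in>UNIV. \<Sum>k\<in>UNIV. (g j k * u i) * Cu i j k) = 0"
    unfolding swapCu K1 by (rule Z1)
  have G2: "(\<Sum>i\<in>UNIV. \<Sum>j\<in>UNIV. \<Sum>k\<in>UNIV. (g i k * u j) * Cu i j k) = 0"
    unfolding swapCu K2 by (rule Z2)
  have G3: "(\<Sum>i\<in>UNIV. \<Sum>j\<in>UNIV. \<Sum>k\<in>UNIV. (g j k * f1 i) * Cu i j k) = 0"
    unfolding swapCu K1 by (rule Z1)
  have L: "fx\<^sup>2 * (\<Sum>i\<in>UNIV. \<Sum>j\<in>UNIV. \<Sum>k\<in>UNIV. C i j k * Cu i j k)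
     = fx * (\<Sum>i\<in>UNIV. \<Sum>j\<in>UNIV. \<Sum>k\<in>UNIV. (fx * C i j k) * Cu i j k)"
    by (simp add: sum_distrib_left power2_eq_square mult.assoc)
  also have "\<dots> = fx * (-2 * (\<Sum>i\<in>UNIV. \<Sum>j\<in>UNIV. \<Sum>k\<in>UNIV. (f1 i * Ric j k) * Cu i j k)
      + 2 * (\<Sum>i\<in>UNIV. \<Sum>j\<in>UNIV. \<Sum>k\<in>UNIV. (f1 j * Ric i k) * Cu i j k)
      + (\<Sum>i\<in>UNIV. \<Sum>j\<in>UNIV. \<Sum>k\<in>UNIV. (g j k * u i) * Cu i j k)
      - (\<Sum>i\<in>UNIV. \<Sum>j\<in>UNIV. \<Sum>k\<in>UNIV. (g i k * u j) * Cu i j k))"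
    unfolding fC by (simp add: algebra_simps sum.distrib sum_subtractf sum_distrib_left sum_negf)
  also have "\<dots> = -4 * fx * (\<Sum>i\<in>UNIV. \<Sum>j\<in>UNIV. \<Sum>k\<in>UNIV. (f1 i * Ric j k) * Cu i j k)"
    unfolding A G1 G2 by simp
  finally have L': "fx\<^sup>2 * (\<Sum>i\<in>UNIV. \<Sum>j\<in>UNIV. \<Sum>k\<in>UNIV. C i j k * Cu i j k)
     = -4 * fx * (\<Sum>i\<in>UNIV. \<Sum>j\<in>UNIV. \<Sum>k\<in>UNIV. (f1 i * Ric j k) * Cu i j k)" .
  have R1: "(\<Sum>i\<in>UNIV. \<Sum>j\<in>UNIV. \<Sum>k\<in>UNIV. C i j k * (\<Sum>a\<in>UNIV. h i a * f1 a)
         * (\<Sum>b\<in>UNIV. \<Sum>c\<in>UNIV. h j b * h k c * (Ric b c - s / 3 * g b c)))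
     = (\<Sum>i\<in>UNIV. \<Sum>j\<in>UNIV. \<Sum>k\<in>UNIV. (f1 i * (Ric j k - s / 3 * g j k)) * Cu i j k)"
  proof -
    have "K (\<lambda>i j k. f1 i * (Ric j k - s / 3 * g j k)) a b c
        = (\<Sum>i\<in>UNIV. h a i * f1 i) * (\<Sum>j\<in>UNIV. \<Sum>k\<in>UNIV. h b j * h c k * (Ric j k - s / 3 * g j k))" for a b c
      unfolding K_def sum3_factor[symmetric] by (simp add: hs ac_simps)
    then show ?thesis unfolding swapCu by (simp add: mult.assoc)
  qed
  have R2: "(\<Sum>i\<in>UNIV. \<Sum>j\<in>UNIV. \<Sum>k\<in>UNIV. (f1 i * (Ric j k - s / 3 * g j k)) * Cu i j k)
     = (\<Sum>i\<in>UNIV. \<Sum>j\<in>UNIV. \<Sum>k\<in>UNIV. (f1 i * Ric j k) * Cu i j k) - s / 3 * (\<Sum>i\<in>UNIV. \<Sum>j\<in>UNIV. \<Sum>k\<in>UNIV. (g j k * f1 i) * Cu i j k)"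
    by (simp add: algebra_simps sum_subtractf sum_distrib_left)
  show ?thesis unfolding N L' R1 R2 G3 by simp
qed


lemma bianchi1:
  assumes Gs: "\<And>m i j. G m i j = G m j i" and dGs: "\<And>n m i j. dG n m i j = dG n m j i"
  shows "Rmf G dG m k i j + Rmf G dG m i j k + Rmf G dG m j k i = 0"
  unfolding Rmf_def
  by (simp add: sum_3 Gs dGs)

lemma ricci_id:
  fixes G :: "idx \<Rightarrow> idx \<Rightarrow> idx \<Rightarrow> real" and dG :: "idx \<Rightarrow> idx \<Rightarrow> idx \<Rightarrow> idx \<Rightarrow> real" and fo :: "idx \<Rightarrow> real" and ft :: "idx \<Rightarrow> idx \<Rightarrow> real"
    and fh :: "idx \<Rightarrow> idx \<Rightarrow> idx \<Rightarrow> real"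
  assumes Gs: "\<And>m i j. G m i j = G m j i" and fts: "\<And>i j. ft i j = ft j i"
    and fhs: "\<And>i j k. fh i j k = fh j i k"
  defines "H \<equiv> \<lambda>j k. ft j k - (\<Sum>m\<in>UNIV. G m j k * fo m)"
  defines "dH \<equiv> \<lambda>i j k. fh i j k - (\<Sum>m\<in>UNIV. dG i m j k * fo m + G m j k * ft i m)"
  defines "DH \<equiv> \<lambda>i j k. dH i j k - (\<Sum>l\<in>UNIV. G l i j * H l k + G l i k * H j l)"
  shows "DH i j k - DH j i k = - (\<Sum>m\<in>UNIV. Rmf G dG m k i j * fo m)"
  unfolding DH_def dH_def H_def Rmf_def
  apply (simp add: sum_3 Gs fts fhs[of j i])
  by algebra

lemma main_alg:
  fixes g Ric ft L1 :: "idx \<Rightarrow> idx \<Rightarrow> real" and G dg dH dRic :: "idx \<Rightarrow> idx \<Rightarrow> idx \<Rightarrow> real"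
    and fo dL :: "idx \<Rightarrow> real" and fz L :: real
  assumes Gs: "\<And>m i j. G m i j = G m j i"
    and H: "\<And>j k. H j k = ft j k - (\<Sum>m\<in>UNIV. G m j k * fo m)"
    and eq0: "\<And>j k. fz * Ric j k = - L * g j k + H j k - g j k"
    and eq1: "\<And>i j k. fz * dRic i j k = - (dL i * g j k + L * dg i j k) + dH i j k - fo i * Ric j k - dg i j k"
    and mc: "\<And>i j k. dg i j k = (\<Sum>l\<in>UNIV. G l i j * g l k) + (\<Sum>l\<in>UNIV. G l i k * g j l)"
  shows "fz * (dRic i j k - (\<Sum>l\<in>UNIV. G l i j * Ric l k + G l i k * Ric j l))
    = - dL i * g j k + (dH i j k - (\<Sum>l\<in>UNIV. G l i j * H l k + G l i k * H j l)) - fo i * Ric j k"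
proof -
  have "fz * (dRic i j k - (\<Sum>l\<in>UNIV. G l i j * Ric l k + G l i k * Ric j l))
     = fz * dRic i j k - (\<Sum>l\<in>UNIV. G l i j * (fz * Ric l k) + G l i k * (fz * Ric j l))"
    by (simp add: algebra_simps sum_distrib_left)
  also have "\<dots> = - dL i * g j k + (dH i j k - (\<Sum>l\<in>UNIV. G l i j * H l k + G l i k * H j l)) - fo i * Ric j k"
    unfolding eq0 eq1 mc[of i j k]
    by (simp add: sum_3; algebra)
  finally show ?thesis .
qed


definition dGam :: "(pt \<Rightarrow> idx \<Rightarrow> idx \<Rightarrow> real) \<Rightarrow> pt \<Rightarrow> idx \<Rightarrow> idx \<Rightarrow> idx \<Rightarrow> idx \<Rightarrow> real" where
  "dGam g y n m i j = pd n (\<lambda>z. christoffel g z m i j) y"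
definition ddGam :: "(pt \<Rightarrow> idx \<Rightarrow> idx \<Rightarrow> real) \<Rightarrow> pt \<Rightarrow> idx \<Rightarrow> idx \<Rightarrow> idx \<Rightarrow> idx \<Rightarrow> idx \<Rightarrow> real" where
  "ddGam g y n i m j k = pd n (pd i (\<lambda>z. christoffel g z m j k)) y"

lemma riem_Rmf: "riem g y = Rmf (christoffel g y) (dGam g y)"
  by (intro ext) (simp add: riem_def Rmf_def dGam_def)

context MT
begin

lemma dGam_sym: "y \<in> U \<Longrightarrow> dGam g y n m i j = dGam g y n m j i"
  unfolding dGam_def by (rule pd_local[OF U]) (auto simp: christ_sym)

lemma ddGam_sym: "y \<in> U \<Longrightarrow> ddGam g y n i m j k = ddGam g y i n m j k"
  unfolding ddGam_def by (rule mixed_pd[OF U christ_sm])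

lemma riem_sm: "smooth_on U (\<lambda>y. riem g y m k i j)"
  unfolding riem_def
  by (intro smooth_add smooth_diff smooth_sum smooth_mult smooth_pd christ_sm U finite)

lemma ricci_riem: assumes y: "y \<in> U" shows "ricci g y k j = (\<Sum>m\<in>UNIV. riem g y m k m j)"
proof -
  have a: "pd m (\<lambda>y. christoffel g y m k j) y = pd m (\<lambda>y. christoffel g y m j k) y" for m
    by (rule pd_local[OF U y]) (simp add: christ_sym)
  have b: "pd j (\<lambda>y. christoffel g y m k m) y = pd j (\<lambda>y. christoffel g y m m k) y" for m
    by (rule pd_local[OF U y]) (simp add: christ_sym)
  show ?thesis unfolding ricci_def riem_def
    by (simp add: a b christ_sym[OF y, of _ k j] christ_sym[OF y, of _ k] sum.distrib sum_subtractf
        algebra_simps)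
qed

lemma ricci_sm: "smooth_on U (\<lambda>y. ricci g y k j)"
  unfolding ricci_def
  by (intro smooth_add smooth_diff smooth_sum smooth_mult smooth_pd christ_sm U finite)

lemma scal_sm: "smooth_on U (scal g)"
proof -
  have "smooth_on U (\<lambda>y. \<Sum>i\<in>UNIV. \<Sum>j\<in>UNIV. ginv g y i j * ricci g y i j)"
    by (intro smooth_sum smooth_mult hsm ricci_sm U finite)
  then show ?thesis unfolding scal_def by simp
qed

lemma dRiem: assumes y: "y \<in> U"
  shows "pd n (\<lambda>y. riem g y m k i j) y = dRmf (christoffel g y) (dGam g y) (ddGam g y) n m k i j"
proof -
  have s1: "smooth_on U (\<lambda>y. pd i (\<lambda>y. christoffel g y m j k) y - pd j (\<lambda>y. christoffel g y m i k) y)"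
    by (intro smooth_diff smooth_pd christ_sm U)
  have s2: "smooth_on U (\<lambda>y. \<Sum>p\<in>UNIV. christoffel g y m i p * christoffel g y p j k)"
    by (intro smooth_sum smooth_mult christ_sm U finite)
  have s3: "smooth_on U (\<lambda>y. \<Sum>p\<in>UNIV. christoffel g y m j p * christoffel g y p i k)"
    by (intro smooth_sum smooth_mult christ_sm U finite)
  have "pd n (\<lambda>y. riem g y m k i j) y
     = pd n (\<lambda>y. pd i (\<lambda>y. christoffel g y m j k) y - pd j (\<lambda>y. christoffel g y m i k) y) y
       + pd n (\<lambda>y. \<Sum>p\<in>UNIV. christoffel g y m i p * christoffel g y p j k) y
       - pd n (\<lambda>y. \<Sum>p\<in>UNIV. christoffel g y m j p * christoffel g y p i k) y"
    unfolding riem_def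
    by (simp add: pd_diff_s[OF smooth_add[OF U s1 s2] s3 y] pd_add_s[OF s1 s2 y])
  also have "\<dots> = dRmf (christoffel g y) (dGam g y) (ddGam g y) n m k i j"
    unfolding dRmf_def ddGam_def dGam_def
    by (simp add: pd_diff_s[OF smooth_pd[OF christ_sm] smooth_pd[OF christ_sm] y]
        pd_sum_s[OF _ _ y] smooth_mult[OF U christ_sm christ_sm] pd_mult_s[OF christ_sm christ_sm y]
        sum.distrib)
  finally show ?thesis .
qed

lemma riemL_formula: assumes y: "y \<in> U"
  defines "ddg \<equiv> \<lambda>i j a b. pd i (pd j (\<lambda>z. g z a b)) y"
  defines "Gl \<equiv> \<lambda>a i j. \<Sum>m\<in>UNIV. g y a m * christoffel g y m i j"
  shows "riemL g y l k i j = (ddg i j k l + ddg i k j l - ddg i l j k)/2 - (ddg j i k l + ddg j k i l - ddg j l i k)/2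
     - (\<Sum>m\<in>UNIV. \<Sum>n\<in>UNIV. Gl m i l * ginv g y m n * Gl n j k) + (\<Sum>m\<in>UNIV. \<Sum>n\<in>UNIV. Gl m j l * ginv g y m n * Gl n i k)"
proof -
  have ii: "pd i (\<lambda>z. \<Sum>m\<in>UNIV. g z l m * christoffel g z m j k) y = (ddg i j k l + ddg i k j l - ddg i l j k)/2" for i j k
  proof -
    have "pd i (\<lambda>z. \<Sum>m\<in>UNIV. g z l m * christoffel g z m j k) y
       = pd i (\<lambda>z. (1/2) * ((pd j (\<lambda>y. g y k l) z + pd k (\<lambda>y. g y j l) z) - pd l (\<lambda>y. g y j k) z)) y"
      by (rule pd_local[OF U y]) (simp add: lowc)
    also have "\<dots> = (1/2) * pd i (\<lambda>z. (pd j (\<lambda>y. g y k l) z + pd k (\<lambda>y. g y j l) z) - pd l (\<lambda>y. g y j k) z) y"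
      by (rule pd_cmult_s[OF _ y]) (intro smooth_add smooth_diff smooth_pd gsm U)
    also have "\<dots> = (1/2) * ((pd i (pd j (\<lambda>y. g y k l)) y + pd i (pd k (\<lambda>y. g y j l)) y) - pd i (pd l (\<lambda>y. g y j k)) y)"
      by (subst pd_diff_s[OF _ _ y], intro smooth_add smooth_pd gsm U, intro smooth_pd gsm,
          subst pd_add_s[OF _ _ y], (intro smooth_pd gsm)+, rule refl)
    also have "\<dots> = (ddg i j k l + ddg i k j l - ddg i l j k)/2"
      unfolding ddg_def by simp
    finally show ?thesis .
  qed
  have i: "(\<Sum>m\<in>UNIV. g y l m * dGam g y i m j k) = pd i (\<lambda>z. \<Sum>m\<in>UNIV. g z l m * christoffel g z m j k) y
      - (\<Sum>m\<in>UNIV. pd i (\<lambda>z. g z l m) y * christoffel g y m j k)" for i j k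
  proof -
    have "pd i (\<lambda>z. \<Sum>m\<in>UNIV. g z l m * christoffel g z m j k) y = (\<Sum>m\<in>UNIV. pd i (\<lambda>z. g z l m * christoffel g z m j k) y)"
      by (rule pd_sum_s[OF _ _ y]) (auto intro: smooth_mult U gsm christ_sm)
    also have "\<dots> = (\<Sum>m\<in>UNIV. pd i (\<lambda>z. g z l m) y * christoffel g y m j k + g y l m * dGam g y i m j k)"
      unfolding dGam_def by (simp add: pd_mult_s[OF gsm christ_sm y])
    finally show ?thesis by (simp add: sum.distrib)
  qed
  have iii: "pd i (\<lambda>z. g z l m) y = Gl m i l + Gl l i m" for i m
    unfolding Gl_def mcompat[OF y] by (simp add: gsym[OF y] mult.commute)
  have iv: "christoffel g y m j k = (\<Sum>n\<in>UNIV. ginv g y m n * Gl n j k)" for m j k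
    unfolding Gl_def by (rule contract_inv[symmetric], rule hg[OF y])
  have v: "(\<Sum>m\<in>UNIV. g y l m * (\<Sum>p\<in>UNIV. christoffel g y m i p * christoffel g y p j k))
      = (\<Sum>p\<in>UNIV. Gl l i p * christoffel g y p j k)" for i j k
    unfolding Gl_def by (simp add: sum_distrib_left sum_distrib_right mult.assoc) (rule sum.swap)
  have "riemL g y l k i j = (\<Sum>m\<in>UNIV. g y l m * dGam g y i m j k) - (\<Sum>m\<in>UNIV. g y l m * dGam g y j m i k)
      + (\<Sum>m\<in>UNIV. g y l m * (\<Sum>p\<in>UNIV. christoffel g y m i p * christoffel g y p j k))
      - (\<Sum>m\<in>UNIV. g y l m * (\<Sum>p\<in>UNIV. christoffel g y m j p * christoffel g y p i k))"
    unfolding riemL_def riem_def dGam_def by (simp add: algebra_simps sum.distrib sum_subtractf)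
  also have "\<dots> = (ddg i j k l + ddg i k j l - ddg i l j k)/2 - (ddg j i k l + ddg j k i l - ddg j l i k)/2
      - (\<Sum>m\<in>UNIV. Gl m i l * christoffel g y m j k) + (\<Sum>m\<in>UNIV. Gl m j l * christoffel g y m i k)"
    unfolding i ii iii v by (simp add: algebra_simps sum.distrib sum_subtractf)
  also have "\<dots> = (ddg i j k l + ddg i k j l - ddg i l j k)/2 - (ddg j i k l + ddg j k i l - ddg j l i k)/2
     - (\<Sum>m\<in>UNIV. \<Sum>n\<in>UNIV. Gl m i l * ginv g y m n * Gl n j k) + (\<Sum>m\<in>UNIV. \<Sum>n\<in>UNIV. Gl m j l * ginv g y m n * Gl n i k)"
    by (subst (1 2) iv) (simp add: sum_distrib_left mult.assoc)
  finally show ?thesis .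
qed

lemma riemL_anti: assumes y: "y \<in> U" shows "riemL g y l k i j = - riemL g y k l i j"
proof -
  let ?ddg = "\<lambda>i j a b. pd i (pd j (\<lambda>z. g z a b)) y"
  let ?Gl = "\<lambda>a i j. \<Sum>m\<in>UNIV. g y a m * christoffel g y m i j"
  have d1: "?ddg i j a b = ?ddg j i a b" for i j a b by (rule mixed_pd[OF U gsm y])
  have d2: "?ddg i j a b = ?ddg i j b a" for i j a b
  proof (rule pd_local[OF U y])
    show "pd j (\<lambda>z. g z a b) z = pd j (\<lambda>z. g z b a) z" if "z \<in> U" for z using dgsym[OF that] .
  qed
  have Gls: "?Gl a i j = ?Gl a j i" for a i j by (simp add: christ_sym[OF y])
  show ?thesis unfolding riemL_formula[OF y, of l k i j] riemL_formula[OF y, of k l i j]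
    by (rule AL1[OF hsym[OF y] Gls d1 d2])
qed

lemma riem_h: assumes y: "y \<in> U"
  shows "riem g y m k i j = (\<Sum>l\<in>UNIV. ginv g y m l * riemL g y l k i j)"
  unfolding riemL_def by (rule contract_inv[symmetric], rule hg[OF y])

lemma riem_anti2: "riem g y m k i j = - riem g y m k j i"
  unfolding riem_def by simp

lemma riemL_anti2: "riemL g y l k i j = - riemL g y l k j i"
  unfolding riemL_def by (simp add: riem_anti2[of _ _ _ i j] sum_negf)

lemma riem_bianchi1: assumes y: "y \<in> U"
  shows "riem g y m k i j + riem g y m i j k + riem g y m j k i = 0"
  unfolding riem_Rmf by (rule bianchi1) (auto intro: christ_sym[OF y] dGam_sym[OF y])

lemma riemL_bianchi1: assumes y: "y \<in> U"
  shows "riemL g y l k i j + riemL g y l i j k + riemL g y l j k i = 0"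
proof -
  have "riemL g y l k i j + riemL g y l i j k + riemL g y l j k i
     = (\<Sum>m\<in>UNIV. g y l m * (riem g y m k i j + riem g y m i j k + riem g y m j k i))"
    unfolding riemL_def by (simp add: algebra_simps sum.distrib)
  then show ?thesis using riem_bianchi1[OF y] by simp
qed

lemma ricci_riemL: assumes y: "y \<in> U"
  shows "ricci g y k j = (\<Sum>l\<in>UNIV. \<Sum>i\<in>UNIV. ginv g y l i * riemL g y l k i j)"
proof -
  have "(\<Sum>l\<in>UNIV. \<Sum>i\<in>UNIV. ginv g y l i * riemL g y l k i j) = (\<Sum>i\<in>UNIV. \<Sum>l\<in>UNIV. ginv g y i l * riemL g y l k i j)"
    by (subst sum.swap) (simp add: hsym[OF y])
  also have "\<dots> = (\<Sum>i\<in>UNIV. riem g y i k i j)" by (simp add: riem_h[OF y])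
  finally show ?thesis using ricci_riem[OF y] by simp
qed

lemma Qid: assumes y: "y \<in> U"
  shows "(\<Sum>k\<in>UNIV. \<Sum>j\<in>UNIV. ginv g y k j * riem g y m k j n) = - (\<Sum>l\<in>UNIV. ginv g y m l * ricci g y l n)"
proof -
  have "(\<Sum>k\<in>UNIV. \<Sum>j\<in>UNIV. ginv g y k j * riem g y m k j n)
     = (\<Sum>k\<in>UNIV. \<Sum>j\<in>UNIV. \<Sum>l\<in>UNIV. ginv g y m l * (ginv g y k j * riemL g y l k j n))"
    by (simp add: riem_h[OF y] sum_distrib_left mult.left_commute)
  also have "\<dots> = (\<Sum>l\<in>UNIV. ginv g y m l * (\<Sum>k\<in>UNIV. \<Sum>j\<in>UNIV. ginv g y k j * riemL g y l k j n))"
  proof -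
    have "(\<Sum>k\<in>UNIV. \<Sum>j\<in>UNIV. \<Sum>l\<in>UNIV. ginv g y m l * (ginv g y k j * riemL g y l k j n))
       = (\<Sum>k\<in>UNIV. \<Sum>l\<in>UNIV. \<Sum>j\<in>UNIV. ginv g y m l * (ginv g y k j * riemL g y l k j n))"
      by (rule sum.cong[OF refl], rule sum.swap)
    also have "\<dots> = (\<Sum>l\<in>UNIV. \<Sum>k\<in>UNIV. \<Sum>j\<in>UNIV. ginv g y m l * (ginv g y k j * riemL g y l k j n))"
      by (rule sum.swap)
    finally show ?thesis by (simp add: sum_distrib_left)
  qed
  also have "\<dots> = - (\<Sum>l\<in>UNIV. ginv g y m l * ricci g y l n)"
  proof -
    have "(\<Sum>k\<in>UNIV. \<Sum>j\<in>UNIV. ginv g y k j * riemL g y l k j n) = - ricci g y l n" for l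
    proof -
      have "(\<Sum>k\<in>UNIV. \<Sum>j\<in>UNIV. ginv g y k j * riemL g y l k j n) = - (\<Sum>k\<in>UNIV. \<Sum>j\<in>UNIV. ginv g y k j * riemL g y k l j n)"
      proof -
        have e: "ginv g y k j * riemL g y l k j n = - (ginv g y k j * riemL g y k l j n)" for k j
          using riemL_anti[OF y, of l k j n] by simp
        show ?thesis by (simp only: e sum_negf)
      qed
      also have "(\<Sum>k\<in>UNIV. \<Sum>j\<in>UNIV. ginv g y k j * riemL g y k l j n) = ricci g y l n"
        unfolding ricci_riemL[OF y] ..
      finally show ?thesis .
    qed
    then show ?thesis by (simp add: sum_negf)
  qed
  finally show ?thesis .
qed

lemma ricci_sym: assumes y: "y \<in> U" shows "ricci g y k j = ricci g y j k"
proof -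
  have e: "riem g y m k m j = riem g y m j m k - riem g y m m j k" for m
    using riem_bianchi1[OF y, of m k m j] riem_anti2[of y m j k m] by simp
  have z: "(\<Sum>m\<in>UNIV. riem g y m m j k) = 0"
  proof -
    let ?S = "\<Sum>m\<in>UNIV. \<Sum>l\<in>UNIV. ginv g y m l * riemL g y l m j k"
    have r: "(\<Sum>m\<in>UNIV. riem g y m m j k) = ?S" by (simp add: riem_h[OF y])
    have "?S = - ?S"
    proof -
      have "?S = - (\<Sum>m\<in>UNIV. \<Sum>l\<in>UNIV. ginv g y m l * riemL g y m l j k)"
      proof -
        have e: "ginv g y m l * riemL g y l m j k = - (ginv g y m l * riemL g y m l j k)" for m l
          using riemL_anti[OF y, of l m j k] by simp
        show ?thesis by (simp only: e sum_negf)
      qed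
      also have "(\<Sum>m\<in>UNIV. \<Sum>l\<in>UNIV. ginv g y m l * riemL g y m l j k) = ?S"
        by (subst sum.swap) (simp add: hsym[OF y])
      finally show ?thesis .
    qed
    then show ?thesis using r by simp
  qed
  show ?thesis unfolding ricci_riem[OF y] using z by (simp add: e sum_subtractf)
qed

lemma decomp_y: assumes y: "y \<in> U"
  shows "riemL g y l k i j = ricci g y l i * g y k j - ricci g y l j * g y k i + ricci g y k j * g y l i
      - ricci g y k i * g y l j - scal g y / 2 * (g y l i * g y k j - g y l j * g y k i)"
proof -
  have D: "riemL g y l k i j = (\<lambda>k j. \<Sum>l\<in>UNIV. \<Sum>i\<in>UNIV. ginv g y l i * riemL g y l k i j) l i * g y k j
      - (\<lambda>k j. \<Sum>l\<in>UNIV. \<Sum>i\<in>UNIV. ginv g y l i * riemL g y l k i j) l j * g y k i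
      + (\<lambda>k j. \<Sum>l\<in>UNIV. \<Sum>i\<in>UNIV. ginv g y l i * riemL g y l k i j) k j * g y l i
      - (\<lambda>k j. \<Sum>l\<in>UNIV. \<Sum>i\<in>UNIV. ginv g y l i * riemL g y l k i j) k i * g y l j
      - (\<Sum>k\<in>UNIV. \<Sum>j\<in>UNIV. ginv g y k j * (\<lambda>k j. \<Sum>l\<in>UNIV. \<Sum>i\<in>UNIV. ginv g y l i * riemL g y l k i j) k j) / 2
        * (g y l i * g y k j - g y l j * g y k i)"
    by (rule decomp3[of "g y" "ginv g y" "riemL g y"], rule gsym[OF y], rule ginv_eq[OF y], rule detnz[OF y],
        rule riemL_anti[OF y], rule riemL_anti2, rule riemL_bianchi1[OF y])
  show ?thesis using D unfolding ricci_riemL[OF y, symmetric] scal_def by simp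
qed

end


lemma pd_sum1_mult:
  assumes "\<And>l. smooth_on U (A l)" "\<And>l. smooth_on U (B l)" "x \<in> U" "open U"
  shows "pd p (\<lambda>y. \<Sum>l\<in>UNIV. A l y * B l y) x = (\<Sum>l\<in>(UNIV::idx set). pd p (A l) x * B l x + A l x * pd p (B l) x)"
proof -
  have "pd p (\<lambda>y. \<Sum>l\<in>UNIV. A l y * B l y) x = (\<Sum>l\<in>(UNIV::idx set). pd p (\<lambda>y. A l y * B l y) x)"
    by (rule pd_sum_s[OF _ _ assms(3)]) (auto intro: smooth_mult assms)
  also have "\<dots> = (\<Sum>l\<in>(UNIV::idx set). pd p (A l) x * B l x + A l x * pd p (B l) x)"
    by (rule sum.cong[OF refl], rule pd_mult_s[OF assms(1,2,3)])
  finally show ?thesis .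
qed

lemma pd_sum2_mult:
  assumes "\<And>k j. smooth_on U (A k j)" "\<And>k j. smooth_on U (B k j)" "x \<in> U" "open U"
  shows "pd p (\<lambda>y. \<Sum>k\<in>UNIV. \<Sum>j\<in>UNIV. A k j y * B k j y) x
     = (\<Sum>k\<in>(UNIV::idx set). \<Sum>j\<in>(UNIV::idx set). pd p (A k j) x * B k j x + A k j x * pd p (B k j) x)"
proof -
  have sm: "smooth_on U (\<lambda>y. \<Sum>j\<in>UNIV. A k j y * B k j y)" for k
    by (intro smooth_sum smooth_mult assms finite)
  have "pd p (\<lambda>y. \<Sum>k\<in>UNIV. \<Sum>j\<in>UNIV. A k j y * B k j y) x = (\<Sum>k\<in>(UNIV::idx set). pd p (\<lambda>y. \<Sum>j\<in>UNIV. A k j y * B k j y) x)"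
    by (rule pd_sum_s[OF _ _ assms(3)]) (auto intro: sm)
  also have "\<dots> = (\<Sum>k\<in>(UNIV::idx set). \<Sum>j\<in>(UNIV::idx set). pd p (A k j) x * B k j x + A k j x * pd p (B k j) x)"
    by (rule sum.cong[OF refl], rule pd_sum1_mult[OF assms])
  finally show ?thesis .
qed

context MT
begin

lemma hess_sm: "smooth_on U (\<lambda>y. hess g f y i j)"
  unfolding hess_def by (intro smooth_diff smooth_sum smooth_mult smooth_pd christ_sm sf U finite)

lemma lap_sm: "smooth_on U (laplacian g f)"
proof -
  have "smooth_on U (\<lambda>y. \<Sum>i\<in>UNIV. \<Sum>j\<in>UNIV. ginv g y i j * hess g f y i j)"
    by (intro smooth_sum smooth_mult hsm hess_sm U finite)
  then show ?thesis unfolding laplacian_def by simp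
qed

lemma eq0: assumes y: "y \<in> U" shows "f y * ricci g y j k = - laplacian g f y * g y j k + hess g f y j k - g y j k"
proof -
  have "- laplacian g f y * g y j k + hess g f y j k - f y * ricci g y j k = g y j k"
    using eqn y unfolding miao_tam_eq_on_def by blast
  then show ?thesis by linarith
qed

lemma eq1: assumes x: "x \<in> U"
  shows "f x * pd i (\<lambda>y. ricci g y j k) x = - (pd i (laplacian g f) x * g x j k + laplacian g f x * pd i (\<lambda>y. g y j k) x)
     + pd i (\<lambda>y. hess g f y j k) x - pd i f x * ricci g x j k - pd i (\<lambda>y. g y j k) x"
proof -
  have "pd i (\<lambda>y. - (laplacian g f y * g y j k) + hess g f y j k - f y * ricci g y j k) x = pd i (\<lambda>y. g y j k) x"
    by (rule pd_local[OF U x]) (use eqn in \<open>auto simp: miao_tam_eq_on_def\<close>)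
  moreover have "pd i (\<lambda>y. - (laplacian g f y * g y j k) + hess g f y j k - f y * ricci g y j k) x
     = - (pd i (laplacian g f) x * g x j k + laplacian g f x * pd i (\<lambda>y. g y j k) x)
       + pd i (\<lambda>y. hess g f y j k) x - (pd i f x * ricci g x j k + f x * pd i (\<lambda>y. ricci g y j k) x)"
  proof -
    have s1: "smooth_on U (\<lambda>y. laplacian g f y * g y j k)" by (intro smooth_mult lap_sm gsm U)
    have s2: "smooth_on U (\<lambda>y. - (laplacian g f y * g y j k))"
      using smooth_cmult[OF U s1, of "-1"] by simp
    have s3: "smooth_on U (\<lambda>y. f y * ricci g y j k)" by (intro smooth_mult sf ricci_sm U)
    have "pd i (\<lambda>y. - (laplacian g f y * g y j k)) x = - pd i (\<lambda>y. laplacian g f y * g y j k) x"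
      using pd_cmult_s[OF s1 x, of i "-1"] by simp
    then show ?thesis
      apply (subst pd_diff_s[OF smooth_add[OF U s2 hess_sm] s3 x])
      apply (subst pd_add_s[OF s2 hess_sm x])
      by (simp add: pd_mult_s[OF lap_sm gsm x] pd_mult_s[OF sf ricci_sm x])
  qed
  ultimately show ?thesis by (simp add: algebra_simps)
qed

lemma dhess: assumes x: "x \<in> U"
  shows "pd i (\<lambda>y. hess g f y j k) x = pd i (pd j (pd k f)) x
     - (\<Sum>m\<in>UNIV. dGam g x i m j k * pd m f x + christoffel g x m j k * pd i (pd m f) x)"
proof -
  have s: "smooth_on U (\<lambda>y. \<Sum>m\<in>UNIV. christoffel g y m j k * pd m f y)"
    by (intro smooth_sum smooth_mult christ_sm smooth_pd sf U finite)
  have "pd i (\<lambda>y. hess g f y j k) x = pd i (pd j (pd k f)) x - pd i (\<lambda>y. \<Sum>m\<in>UNIV. christoffel g y m j k * pd m f y) x"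
    unfolding hess_def by (rule pd_diff_s[OF smooth_pd[OF smooth_pd[OF sf]] s x])
  also have "pd i (\<lambda>y. \<Sum>m\<in>UNIV. christoffel g y m j k * pd m f y) x
     = (\<Sum>m\<in>UNIV. dGam g x i m j k * pd m f x + christoffel g x m j k * pd i (pd m f) x)"
    unfolding dGam_def
    by (simp add: pd_sum_s[OF _ _ x] smooth_mult[OF U christ_sm smooth_pd[OF sf]] pd_mult_s[OF christ_sm smooth_pd[OF sf] x])
  finally show ?thesis .
qed

lemma cov_step: assumes x: "x \<in> U"
  shows "f x * cov_deriv2 g (ricci g) x i j k = - pd i (laplacian g f) x * g x j k
     + (pd i (\<lambda>y. hess g f y j k) x - (\<Sum>l\<in>UNIV. christoffel g x l i j * hess g f x l k + christoffel g x l i k * hess g f x j l))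
     - pd i f x * ricci g x j k"
  unfolding cov_deriv2_def
  by (rule main_alg[where ft="\<lambda>a b. pd a (pd b f) x" and dg="\<lambda>i j k. pd i (\<lambda>y. g y j k) x"
        and dH = "\<lambda>i j k. pd i (\<lambda>y. hess g f y j k) x" and dRic="\<lambda>i j k. pd i (\<lambda>y. ricci g y j k) x"
        and fo="\<lambda>m. pd m f x" and dL="\<lambda>i. pd i (laplacian g f) x" and L="laplacian g f x"])
     (auto simp: christ_sym[OF x] hess_def eq0[OF x] eq1[OF x] mcompat[OF x])

lemma DH_anti: assumes x: "x \<in> U"
  shows "(pd i (\<lambda>y. hess g f y j k) x - (\<Sum>l\<in>UNIV. christoffel g x l i j * hess g f x l k + christoffel g x l i k * hess g f x j l))
     - (pd j (\<lambda>y. hess g f y i k) x - (\<Sum>l\<in>UNIV. christoffel g x l j i * hess g f x l k + christoffel g x l j k * hess g f x i l))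
     = - (\<Sum>m\<in>UNIV. riem g x m k i j * pd m f x)"
proof -
  have H: "hess g f x a b = pd a (pd b f) x - (\<Sum>m\<in>UNIV. christoffel g x m a b * pd m f x)" for a b
    unfolding hess_def by simp
  show ?thesis unfolding dhess[OF x] H riem_Rmf
    by (rule ricci_id[where fh="\<lambda>i j k. pd i (pd j (pd k f)) x" and ft="\<lambda>a b. pd a (pd b f) x"])
       (auto simp: christ_sym[OF x] mixed_pd[OF U sf x] mixed_pd[OF U smooth_pd[OF sf] x])
qed

lemma RF: assumes x: "x \<in> U"
  defines "F \<equiv> \<lambda>l. \<Sum>m\<in>UNIV. ginv g x l m * pd m f x"
  shows "(\<Sum>m\<in>UNIV. riem g x m k i j * pd m f x) =
     (\<Sum>l\<in>UNIV. F l * ricci g x l i) * g x k j - (\<Sum>l\<in>UNIV. F l * ricci g x l j) * g x k i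
     + ricci g x k j * pd i f x - ricci g x k i * pd j f x - scal g x / 2 * (pd i f x * g x k j - pd j f x * g x k i)"
proof -
  have Fg: "(\<Sum>l\<in>UNIV. F l * g x l a) = pd a f x" for a
  proof -
    have "(\<Sum>l\<in>UNIV. F l * g x l a) = (\<Sum>l\<in>UNIV. \<Sum>m\<in>UNIV. pd m f x * (ginv g x m l * g x l a))"
      unfolding F_def sum_distrib_right by (simp add: hsym[OF x] ac_simps)
    also have "\<dots> = (\<Sum>m\<in>UNIV. pd m f x * (\<Sum>l\<in>UNIV. ginv g x m l * g x l a))"
      by (subst sum.swap) (simp add: sum_distrib_left)
    also have "\<dots> = pd a f x" using hg[OF x] by simp
    finally show ?thesis .
  qed
  have "(\<Sum>m\<in>UNIV. riem g x m k i j * pd m f x) = (\<Sum>m\<in>UNIV. \<Sum>l\<in>UNIV. pd m f x * ginv g x l m * riemL g x l k i j)"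
    by (simp add: riem_h[OF x] sum_distrib_left sum_distrib_right hsym[OF x] ac_simps)
  also have "\<dots> = (\<Sum>l\<in>UNIV. F l * riemL g x l k i j)"
    unfolding F_def by (subst sum.swap) (simp add: sum_distrib_left sum_distrib_right ac_simps)
  also have "\<dots> = (\<Sum>l\<in>UNIV. F l * ricci g x l i) * g x k j - (\<Sum>l\<in>UNIV. F l * ricci g x l j) * g x k i
     + ricci g x k j * (\<Sum>l\<in>UNIV. F l * g x l i) - ricci g x k i * (\<Sum>l\<in>UNIV. F l * g x l j)
     - scal g x / 2 * ((\<Sum>l\<in>UNIV. F l * g x l i) * g x k j - (\<Sum>l\<in>UNIV. F l * g x l j) * g x k i)"
    unfolding decomp_y[OF x]
    by (simp add: algebra_simps sum.distrib sum_subtractf sum_distrib_left sum_distrib_right)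
  finally show ?thesis unfolding Fg .
qed

lemma main_x: assumes x: "x \<in> U"
  defines "w \<equiv> \<lambda>i. - pd i (laplacian g f) x - ((\<Sum>l\<in>UNIV. (\<Sum>m\<in>UNIV. ginv g x l m * pd m f x) * ricci g x l i) - scal g x / 2 * pd i f x)"
  shows "f x * (cov_deriv2 g (ricci g) x i j k - cov_deriv2 g (ricci g) x j i k)
    = -2 * (pd i f x * ricci g x j k - pd j f x * ricci g x i k) + g x j k * w i - g x i k * w j"
proof -
  have "f x * (cov_deriv2 g (ricci g) x i j k - cov_deriv2 g (ricci g) x j i k)
     = f x * cov_deriv2 g (ricci g) x i j k - f x * cov_deriv2 g (ricci g) x j i k" by (simp add: algebra_simps)
  also have "\<dots> = - pd i (laplacian g f) x * g x j k + pd j (laplacian g f) x * g x i k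
     - (\<Sum>m\<in>UNIV. riem g x m k i j * pd m f x) - pd i f x * ricci g x j k + pd j f x * ricci g x i k"
    unfolding cov_step[OF x] using DH_anti[OF x, of i j k] by simp
  also have "\<dots> = -2 * (pd i f x * ricci g x j k - pd j f x * ricci g x i k) + g x j k * w i - g x i k * w j"
    unfolding RF[OF x] w_def by (simp add: algebra_simps ricci_sym[OF x, of k] gsym[OF x, of k])
  finally show ?thesis .
qed

lemma dric: assumes x: "x \<in> U"
  shows "pd p (\<lambda>y. ricci g y l n) x = (\<Sum>q\<in>UNIV. dRmf (christoffel g x) (dGam g x) (ddGam g x) p q l q n)"
proof -
  have "pd p (\<lambda>y. ricci g y l n) x = pd p (\<lambda>y. \<Sum>q\<in>UNIV. riem g y q l q n) x"
    by (rule pd_local[OF U x]) (simp add: ricci_riem)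
  also have "\<dots> = (\<Sum>q\<in>UNIV. pd p (\<lambda>y. riem g y q l q n) x)"
    by (rule pd_sum_s[OF _ _ x]) (auto intro: riem_sm)
  finally show ?thesis by (simp add: dRiem[OF x])
qed

lemma dscal: assumes x: "x \<in> U"
  shows "pd n (scal g) x = (\<Sum>k\<in>UNIV. \<Sum>j\<in>UNIV. pd n (\<lambda>y. ginv g y k j) x * ricci g x k j + ginv g x k j * pd n (\<lambda>y. ricci g y k j) x)"
  unfolding scal_def by (rule pd_sum2_mult[OF hsm ricci_sm x U])

lemma dQ: assumes x: "x \<in> U"
  shows "(\<Sum>k\<in>UNIV. \<Sum>j\<in>UNIV. pd p (\<lambda>y. ginv g y k j) x * Rmf (christoffel g x) (dGam g x) m k j n
        + ginv g x k j * dRmf (christoffel g x) (dGam g x) (ddGam g x) p m k j n)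
     = - (\<Sum>l\<in>UNIV. pd p (\<lambda>y. ginv g y m l) x * ricci g x l n + ginv g x m l * pd p (\<lambda>y. ricci g y l n) x)"
proof -
  have "pd p (\<lambda>y. \<Sum>k\<in>UNIV. \<Sum>j\<in>UNIV. ginv g y k j * riem g y m k j n) x
      = pd p (\<lambda>y. (-1) * (\<Sum>l\<in>UNIV. ginv g y m l * ricci g y l n)) x"
    by (rule pd_local[OF U x]) (simp add: Qid)
  also have "\<dots> = (-1) * pd p (\<lambda>y. \<Sum>l\<in>UNIV. ginv g y m l * ricci g y l n) x"
    by (rule pd_cmult_s[OF _ x]) (intro smooth_sum smooth_mult hsm ricci_sm U finite)
  finally have e: "pd p (\<lambda>y. \<Sum>k\<in>UNIV. \<Sum>j\<in>UNIV. ginv g y k j * riem g y m k j n) x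
      = - pd p (\<lambda>y. \<Sum>l\<in>UNIV. ginv g y m l * ricci g y l n) x" by simp
  have l: "pd p (\<lambda>y. \<Sum>k\<in>UNIV. \<Sum>j\<in>UNIV. ginv g y k j * riem g y m k j n) x
     = (\<Sum>k\<in>UNIV. \<Sum>j\<in>UNIV. pd p (\<lambda>y. ginv g y k j) x * riem g x m k j n + ginv g x k j * pd p (\<lambda>y. riem g y m k j n) x)"
    by (rule pd_sum2_mult[OF hsm riem_sm x U])
  have r: "pd p (\<lambda>y. \<Sum>l\<in>UNIV. ginv g y m l * ricci g y l n) x
     = (\<Sum>l\<in>UNIV. pd p (\<lambda>y. ginv g y m l) x * ricci g x l n + ginv g x m l * pd p (\<lambda>y. ricci g y l n) x)"
    by (rule pd_sum1_mult[OF hsm ricci_sm x U])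
  show ?thesis using e unfolding l r dRiem[OF x] by (simp add: riem_Rmf)
qed

lemma tr_both: assumes x: "x \<in> U"
  shows "(\<Sum>k\<in>UNIV. \<Sum>j\<in>UNIV. ginv g x k j * cov_deriv2 g (ricci g) x j k n) = pd n (scal g) x / 2"
    and "(\<Sum>k\<in>UNIV. \<Sum>j\<in>UNIV. ginv g x k j * cov_deriv2 g (ricci g) x n k j) = pd n (scal g) x"
proof -
  have dh': "\<And>n a b. pd n (\<lambda>y. ginv g y a b) x = - (\<Sum>c\<in>UNIV. christoffel g x a n c * ginv g x c b) - (\<Sum>c\<in>UNIV. christoffel g x b n c * ginv g x a c)"
    by (rule dh[OF x])
  have CB: "(\<Sum>k\<in>UNIV. \<Sum>j\<in>UNIV. pd n (\<lambda>y. ginv g y k j) x * ricci g x k j + ginv g x k j * pd n (\<lambda>y. ricci g y k j) x)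
     = 2 * (\<Sum>k\<in>UNIV. \<Sum>j\<in>UNIV. ginv g x k j * (pd j (\<lambda>y. ricci g y k n) x
        - (\<Sum>l\<in>UNIV. christoffel g x l j k * ricci g x l n + christoffel g x l j n * ricci g x k l)))"
    by (rule contracted_bianchi[where dh="\<lambda>n a b. pd n (\<lambda>y. ginv g y a b) x" and ric="ricci g x"
          and dric="\<lambda>p l n. pd p (\<lambda>y. ricci g y l n) x"])
       (rule christ_sym[OF x] dGam_sym[OF x] ddGam_sym[OF x] hsym[OF x] dh' Qid[OF x, unfolded riem_Rmf]
         dQ[OF x] ricci_riem[OF x, unfolded riem_Rmf] dric[OF x])+
  show "(\<Sum>k\<in>UNIV. \<Sum>j\<in>UNIV. ginv g x k j * cov_deriv2 g (ricci g) x j k n) = pd n (scal g) x / 2"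
    using CB unfolding dscal[OF x] cov_deriv2_def by simp
  show "(\<Sum>k\<in>UNIV. \<Sum>j\<in>UNIV. ginv g x k j * cov_deriv2 g (ricci g) x n k j) = pd n (scal g) x"
    unfolding dscal[OF x] cov_deriv2_def by (rule cb_a[OF dh'])
qed

lemma DRs: assumes x: "x \<in> U"
  shows "cov_deriv2 g (ricci g) x i j k = cov_deriv2 g (ricci g) x i k j"
proof -
  have "pd i (\<lambda>y. ricci g y j k) x = pd i (\<lambda>y. ricci g y k j) x"
    by (rule pd_local[OF U x]) (simp add: ricci_sym)
  then show ?thesis unfolding cov_deriv2_def by (simp add: ricci_sym[OF x] algebra_simps)
qed

end


theorem lemma4:
  fixes U :: "(real^3) set" and g :: "real^3 \<Rightarrow> 3 \<Rightarrow> 3 \<Rightarrow> real" and f :: "real^3 \<Rightarrow> real"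
  assumes "open U"
    and "riem_metric_on U g"
    and "smooth_on U f"
    and "miao_tam_eq_on U g f"
    and "x \<in> U"
  shows "(f x)^2 * cotton_norm2 g x =
     - 4 * f x * (\<Sum>i\<in>UNIV. \<Sum>j\<in>UNIV. \<Sum>k\<in>UNIV. cotton g x i j k * (\<Sum>a\<in>UNIV. ginv g x i a * pd a f x)
         * (\<Sum>b\<in>UNIV. \<Sum>c\<in>UNIV. ginv g x j b * ginv g x k c * traceless_ricci g x b c))"
proof -
  interpret MT U g f using assms(1-4) by unfold_locales
  have x: "x \<in> U" by (rule assms(5))
  show ?thesis
    unfolding cotton_norm2_def cotton_def traceless_ricci_def
    apply (rule FIN[where h="ginv g x" and g="g x" and Ric="ricci g x" and DR="cov_deriv2 g (ricci g) x"
          and ds="\<lambda>n. pd n (scal g) x" and fx="f x" and s="scal g x"])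
    apply (rule hsym[OF x])
    apply (rule gsym[OF x])
    apply (rule gh[OF x])
    apply (rule DRs[OF x])
    apply (rule tr_both(1)[OF x])
    apply (rule tr_both(2)[OF x])
    apply (rule main_x[OF x])
    done
qed


end
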